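(* Let $\Theta$ and $\varphi$ be inner functions such that $\varphi$ divides $\Theta$ (i.e. $I:=\Theta/\varphi$ is inner). Then every unit vector belonging to $\{vg : g\in\mathcal{K}_\varphi,\ v \text{ an inner divisor of } I\}$ is $\varphi(S_\Theta)$-inner, i.e. satisfies $\langle \varphi(S_\Theta)^n h, h\rangle = 0$ for all $n\ge1$.
   Context: $H^2$ is the Hardy space on the unit disk with inner product $\langle f,g\rangle=\int_{\mathbb{T}} f\overline{g}\,dm$. For an inner function $\Theta$, the model space is $\mathcal{K}_\Theta=(\Theta H^2)^\perp$ and $P_\Theta$ is the orthogonal projection of $L^2(\mathbb{T},m)$ onto $\mathcal{K}_\Theta$. The compressed shift is $S_\Theta:\mathcal{K}_\Theta\to\mathcal{K}_\Theta$, $S_\Theta f=P_\Theta(zf)$, and for $\varphi\in H^\infty$ the functional calculus gives $\varphi(S_\Theta)=P_\Theta T_\varphi|_{\mathcal{K}_\Theta}$, where $T_\varphi f=\varphi f$. An inner function $v$ is an inner divisor of an inner function $I$ if $I/v$ is inner. *)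

theory Defs
  imports "HOL-Complex_Analysis.Complex_Analysis"
begin

definition taylor_coeff :: "(complex \<Rightarrow> complex) \<Rightarrow> nat \<Rightarrow> complex" where
  "taylor_coeff f n = (deriv ^^ n) f 0 / of_nat (fact n)"

text \<open>Hardy space H^2: holomorphic functions on the open unit disc with square-summable
  Taylor coefficients; values outside the disc are normalised to 0 so that elements
  are uniquely determined.\<close>
definition H2 :: "(complex \<Rightarrow> complex) set" where
  "H2 = {f. f holomorphic_on ball 0 1 \<and> (\<forall>z. z \<notin> ball 0 1 \<longrightarrow> f z = 0) \<and>
            summable (\<lambda>n. (norm (taylor_coeff f n))\<^sup>2)}"

text \<open>The H^2 inner product (equals the integral of f * conj g over the circle w.r.t.
  normalised Lebesgue measure, by Parseval).\<close>
definition h2_inner :: "(complex \<Rightarrow> complex) \<Rightarrow> (complex \<Rightarrow> complex) \<Rightarrow> complex" where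
  "h2_inner f g = (\<Sum>n. taylor_coeff f n * cnj (taylor_coeff g n))"

definition inner_fun :: "(complex \<Rightarrow> complex) \<Rightarrow> bool" where
  "inner_fun u \<longleftrightarrow> u holomorphic_on ball 0 1 \<and> bounded (u ` ball 0 1) \<and>
     (AE t in lebesgue_on {0..2*pi}. \<exists>L. ((\<lambda>r. u (complex_of_real r * cis t)) \<longlongrightarrow> L) (at_left 1)
                                        \<and> norm L = 1)"

definition inner_divisor :: "(complex \<Rightarrow> complex) \<Rightarrow> (complex \<Rightarrow> complex) \<Rightarrow> bool" where
  "inner_divisor v I \<longleftrightarrow> inner_fun v \<and> inner_fun I \<and>
     (\<exists>u. inner_fun u \<and> (\<forall>z\<in>ball 0 1. I z = v z * u z))"

definition model_space :: "(complex \<Rightarrow> complex) \<Rightarrow> (complex \<Rightarrow> complex) set" where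
  "model_space \<Theta> = {f \<in> H2. \<forall>k\<in>H2. h2_inner f (\<lambda>z. \<Theta> z * k z) = 0}"

definition model_proj :: "(complex \<Rightarrow> complex) \<Rightarrow> (complex \<Rightarrow> complex) \<Rightarrow> (complex \<Rightarrow> complex)" where
  "model_proj \<Theta> f = (THE g. g \<in> model_space \<Theta> \<and>
                            (\<forall>k\<in>model_space \<Theta>. h2_inner (\<lambda>z. f z - g z) k = 0))"

text \<open>phi(S_Theta) = P_Theta T_phi restricted to K_Theta.\<close>
definition compressed_op :: "(complex \<Rightarrow> complex) \<Rightarrow> (complex \<Rightarrow> complex) \<Rightarrow>
     (complex \<Rightarrow> complex) \<Rightarrow> (complex \<Rightarrow> complex)" where
  "compressed_op \<Theta> \<phi> h = model_proj \<Theta> (\<lambda>z. \<phi> z * h z)"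

end

theory Submission
  imports Defs
begin

definition l2 :: "(nat \<Rightarrow> complex) \<Rightarrow> bool" where
  "l2 a \<longleftrightarrow> summable (\<lambda>n. (cmod (a n))\<^sup>2)"
definition nsq :: "(nat \<Rightarrow> complex) \<Rightarrow> real" where
  "nsq a = (\<Sum>n. (cmod (a n))\<^sup>2)"
definition ip :: "(nat \<Rightarrow> complex) \<Rightarrow> (nat \<Rightarrow> complex) \<Rightarrow> complex" where
  "ip a b = (\<Sum>n. a n * cnj (b n))"

lemma l2_abs_prod:
  assumes "l2 a" "l2 b"
  shows "summable (\<lambda>n. cmod (a n) * cmod (b n))"
proof (rule summable_comparison_test')
  show "summable (\<lambda>n. ((cmod (a n))\<^sup>2 + (cmod (b n))\<^sup>2) / 2)"
    using assms unfolding l2_def by (intro summable_divide summable_add)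
  fix n
  have "2 * (cmod (a n) * cmod (b n)) \<le> (cmod (a n))\<^sup>2 + (cmod (b n))\<^sup>2"
    using sum_squares_bound[of "cmod (a n)" "cmod (b n)"] by (simp add: algebra_simps)
  then show "norm (cmod (a n) * cmod (b n)) \<le> ((cmod (a n))\<^sup>2 + (cmod (b n))\<^sup>2) / 2"
    by simp
qed

lemma ip_summable_norm:
  assumes "l2 a" "l2 b"
  shows "summable (\<lambda>n. norm (a n * cnj (b n)))"
  using l2_abs_prod[OF assms] by (simp add: norm_mult)

lemma ip_summable:
  assumes "l2 a" "l2 b"
  shows "summable (\<lambda>n. a n * cnj (b n))"
  by (rule summable_norm_cancel[OF ip_summable_norm[OF assms]])

lemma l2_add: assumes "l2 a" "l2 b" shows "l2 (\<lambda>n. a n + b n)"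
  unfolding l2_def
proof (rule summable_comparison_test')
  show "summable (\<lambda>n. 2 * (cmod (a n))\<^sup>2 + 2 * (cmod (b n))\<^sup>2)"
    using assms unfolding l2_def by (intro summable_add summable_mult)
  fix n
  have "(cmod (a n + b n))\<^sup>2 \<le> (cmod (a n) + cmod (b n))\<^sup>2"
    by (intro power_mono norm_triangle_ineq) auto
  also have "\<dots> \<le> 2 * (cmod (a n))\<^sup>2 + 2 * (cmod (b n))\<^sup>2"
    using sum_squares_bound[of "cmod (a n)" "cmod (b n)"] by (simp add: power2_eq_square algebra_simps)
  finally show "norm ((cmod (a n + b n))\<^sup>2) \<le> 2 * (cmod (a n))\<^sup>2 + 2 * (cmod (b n))\<^sup>2" by simp
qed

lemma l2_scale: assumes "l2 a" shows "l2 (\<lambda>n. c * a n)"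
  using assms unfolding l2_def by (simp add: norm_mult power_mult_distrib summable_mult)

lemma l2_uminus: assumes "l2 a" shows "l2 (\<lambda>n. - a n)"
  using assms unfolding l2_def by simp

lemma l2_diff: assumes "l2 a" "l2 b" shows "l2 (\<lambda>n. a n - b n)"
  using l2_add[OF assms(1) l2_uminus[OF assms(2)]] by simp

lemma l2_zero: "l2 (\<lambda>n. 0)" unfolding l2_def by simp

lemma l2_sum: assumes "\<And>i. i \<in> S \<Longrightarrow> l2 (A i)" shows "l2 (\<lambda>n. \<Sum>i\<in>S. A i n)"
  using assms
proof (induction S rule: infinite_finite_induct)
  case (insert x F)
  then show ?case using l2_add[of "A x" "\<lambda>n. \<Sum>i\<in>F. A i n"] by simp
qed (auto simp: l2_zero)

lemma l2_finite_support: assumes "\<And>n. n \<ge> N \<Longrightarrow> a n = 0" shows "l2 a"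
  unfolding l2_def by (rule summable_finite[of "{..<N}"]) (use assms in auto)

lemma ip_diff_left: assumes "l2 a" "l2 b" "l2 c"
  shows "ip (\<lambda>n. a n - b n) c = ip a c - ip b c"
  unfolding ip_def using suminf_diff[OF ip_summable[OF assms(1,3)] ip_summable[OF assms(2,3)]]
  by (simp add: algebra_simps)

lemma ip_add_left: assumes "l2 a" "l2 b" "l2 c"
  shows "ip (\<lambda>n. a n + b n) c = ip a c + ip b c"
  unfolding ip_def using suminf_add[OF ip_summable[OF assms(1,3)] ip_summable[OF assms(2,3)]]
  by (simp add: algebra_simps)

lemma ip_scale_left: assumes "l2 a" "l2 b"
  shows "ip (\<lambda>n. c * a n) b = c * ip a b"
  unfolding ip_def using suminf_mult[OF ip_summable[OF assms], of c]
  by (simp add: algebra_simps)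

lemma ip_cnj: assumes "l2 a" "l2 b" shows "ip b a = cnj (ip a b)"
proof -
  have "(\<lambda>n. a n * cnj (b n)) sums ip a b" unfolding ip_def
    using ip_summable[OF assms] by (rule summable_sums)
  then have "(\<lambda>n. cnj (a n * cnj (b n))) sums cnj (ip a b)" by (subst sums_cnj)
  then have "(\<lambda>n. b n * cnj (a n)) sums cnj (ip a b)" by (simp add: mult.commute)
  then show ?thesis unfolding ip_def by (rule sums_unique[symmetric])
qed

lemma ip_diff_right: assumes "l2 a" "l2 b" "l2 c"
  shows "ip c (\<lambda>n. a n - b n) = ip c a - ip c b"
proof -
  have "ip c (\<lambda>n. a n - b n) = cnj (ip (\<lambda>n. a n - b n) c)"
    using assms by (intro ip_cnj l2_diff)
  also have "\<dots> = cnj (ip a c) - cnj (ip b c)" using ip_diff_left[OF assms] by simp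
  also have "\<dots> = ip c a - ip c b" using assms ip_cnj[of c a] ip_cnj[of c b] by simp
  finally show ?thesis .
qed

lemma ip_add_right: assumes "l2 a" "l2 b" "l2 c"
  shows "ip c (\<lambda>n. a n + b n) = ip c a + ip c b"
proof -
  have "ip c (\<lambda>n. a n + b n) = cnj (ip (\<lambda>n. a n + b n) c)"
    using assms by (intro ip_cnj l2_add)
  also have "\<dots> = cnj (ip a c) + cnj (ip b c)" using ip_add_left[OF assms] by simp
  also have "\<dots> = ip c a + ip c b" using assms ip_cnj[of c a] ip_cnj[of c b] by simp
  finally show ?thesis .
qed

lemma ip_scale_right: assumes "l2 a" "l2 b"
  shows "ip b (\<lambda>n. c * a n) = cnj c * ip b a"
proof -
  have "ip b (\<lambda>n. c * a n) = cnj (ip (\<lambda>n. c * a n) b)"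
    using assms by (intro ip_cnj l2_scale)
  also have "\<dots> = cnj c * cnj (ip a b)" using ip_scale_left[OF assms] by simp
  also have "\<dots> = cnj c * ip b a" using assms ip_cnj[of b a] by simp
  finally show ?thesis .
qed

lemma ip_sum_left: assumes "finite S" "\<And>i. i \<in> S \<Longrightarrow> l2 (A i)" "l2 b"
  shows "ip (\<lambda>n. \<Sum>i\<in>S. A i n) b = (\<Sum>i\<in>S. ip (A i) b)"
  using assms
proof (induction S rule: finite_induct)
  case empty then show ?case by (simp add: ip_def)
next
  case (insert x F)
  have "ip (\<lambda>n. \<Sum>i\<in>insert x F. A i n) b = ip (\<lambda>n. A x n + (\<Sum>i\<in>F. A i n)) b"
    using insert by simp
  also have "\<dots> = ip (A x) b + ip (\<lambda>n. \<Sum>i\<in>F. A i n) b"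
    using insert by (intro ip_add_left l2_sum) auto
  finally show ?case using insert by simp
qed

lemma ip_sum_right: assumes "finite S" "\<And>i. i \<in> S \<Longrightarrow> l2 (A i)" "l2 b"
  shows "ip b (\<lambda>n. \<Sum>i\<in>S. A i n) = (\<Sum>i\<in>S. ip b (A i))"
proof -
  have "ip b (\<lambda>n. \<Sum>i\<in>S. A i n) = cnj (ip (\<lambda>n. \<Sum>i\<in>S. A i n) b)"
    using assms by (intro ip_cnj l2_sum) auto
  also have "\<dots> = (\<Sum>i\<in>S. cnj (ip (A i) b))" using ip_sum_left[OF assms] by simp
  also have "\<dots> = (\<Sum>i\<in>S. ip b (A i))" using assms by (intro sum.cong refl) (metis ip_cnj complex_cnj_cnj)
  finally show ?thesis .
qed

lemma ip_self: assumes "l2 a" shows "ip a a = of_real (nsq a)"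
proof -
  have "ip a a = (\<Sum>n. of_real ((cmod (a n))\<^sup>2))"
    unfolding ip_def by (simp only: complex_norm_square)
  also have "\<dots> = of_real (nsq a)" unfolding nsq_def
    using assms unfolding l2_def by (rule suminf_of_real[symmetric])
  finally show ?thesis .
qed

lemma nsq_nonneg: "l2 a \<Longrightarrow> nsq a \<ge> 0"
  unfolding nsq_def l2_def by (intro suminf_nonneg) auto

lemma nsq_eq_0: assumes "l2 a" "nsq a = 0" shows "a n = 0"
proof -
  have "(\<lambda>n. (cmod (a n))\<^sup>2) sums 0" using assms unfolding l2_def nsq_def
    by (metis summable_sums)
  then have "\<forall>n. (cmod (a n))\<^sup>2 = 0"
    using suminf_eq_zero_iff[of "\<lambda>n. (cmod (a n))\<^sup>2"] sums_unique[of "\<lambda>n. (cmod (a n))\<^sup>2" 0]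
    by (auto simp: sums_summable)
  then show ?thesis by simp
qed

lemma abs_prod_le:
  assumes "l2 a" "l2 b" "t > 0"
  shows "(\<Sum>n. cmod (a n) * cmod (b n)) \<le> (t * nsq a + nsq b / t) / 2"
proof -
  have "(\<Sum>n. cmod (a n) * cmod (b n)) \<le> (\<Sum>n. (t * (cmod (a n))\<^sup>2 + (cmod (b n))\<^sup>2 / t) / 2)"
  proof (rule suminf_le)
    fix n
    have "0 \<le> (sqrt t * cmod (a n) - cmod (b n) / sqrt t)\<^sup>2" by simp
    also have "\<dots> = t * (cmod (a n))\<^sup>2 + (cmod (b n))\<^sup>2 / t - 2 * cmod (a n) * cmod (b n)"
      using assms(3) by (simp add: power2_diff power_mult_distrib power_divide field_simps)
    finally show "cmod (a n) * cmod (b n) \<le> (t * (cmod (a n))\<^sup>2 + (cmod (b n))\<^sup>2 / t) / 2"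
      by simp
    show "summable (\<lambda>n. cmod (a n) * cmod (b n))" using l2_abs_prod[OF assms(1,2)] .
    show "summable (\<lambda>n. (t * (cmod (a n))\<^sup>2 + (cmod (b n))\<^sup>2 / t) / 2)"
      using assms unfolding l2_def by (intro summable_divide summable_add summable_mult)
  qed
  also have "\<dots> = (t * nsq a + nsq b / t) / 2"
  proof -
    define A where "A n = (cmod (a n))\<^sup>2" for n
    define B where "B n = (cmod (b n))\<^sup>2" for n
    have s1: "summable (\<lambda>n. t * A n)" using assms unfolding l2_def A_def by (intro summable_mult)
    have s2: "summable (\<lambda>n. B n / t)" using assms unfolding l2_def B_def by (intro summable_divide)
    have "(\<Sum>n. (t * A n + B n / t) / 2) = (\<Sum>n. t * A n + B n / t) / 2"
      by (rule suminf_divide[OF summable_add[OF s1 s2]])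
    also have "(\<Sum>n. t * A n + B n / t) = (\<Sum>n. t * A n) + (\<Sum>n. B n / t)"
      by (rule suminf_add[OF s1 s2, symmetric])
    also have "(\<Sum>n. t * A n) = t * nsq a" unfolding nsq_def A_def
      using assms(1) unfolding l2_def by (rule suminf_mult)
    also have "(\<Sum>n. B n / t) = nsq b / t" unfolding nsq_def B_def
      using assms(2) unfolding l2_def by (rule suminf_divide)
    finally show ?thesis by (simp add: A_def B_def)
  qed
  finally show ?thesis .
qed

lemma cauchy_schwarz:
  assumes "l2 a" "l2 b"
  shows "cmod (ip a b) \<le> sqrt (nsq a) * sqrt (nsq b)"
proof -
  have "cmod (ip a b) \<le> (\<Sum>n. cmod (a n) * cmod (b n))"
    unfolding ip_def using summable_norm[OF ip_summable_norm[OF assms]] by (simp add: norm_mult)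
  also have "\<dots> \<le> sqrt (nsq a) * sqrt (nsq b)"
  proof (cases "nsq a = 0 \<or> nsq b = 0")
    case True
    then have "(\<lambda>n. cmod (a n) * cmod (b n)) = (\<lambda>n. 0)"
      using nsq_eq_0[OF assms(1)] nsq_eq_0[OF assms(2)] by auto
    then show ?thesis using nsq_nonneg assms by simp
  next
    case False
    then have pa: "nsq a > 0" and pb: "nsq b > 0" using nsq_nonneg assms by force+
    define t where "t = sqrt (nsq b) / sqrt (nsq a)"
    have t: "t > 0" using pa pb by (simp add: t_def)
    have "(\<Sum>n. cmod (a n) * cmod (b n)) \<le> (t * nsq a + nsq b / t) / 2"
      using abs_prod_le[OF assms t] .
    also have "\<dots> = sqrt (nsq a) * sqrt (nsq b)"
    proof -
      have ea: "nsq a = sqrt (nsq a) * sqrt (nsq a)" using pa by simp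
      have eb: "nsq b = sqrt (nsq b) * sqrt (nsq b)" using pb by simp
      have "t * nsq a = sqrt (nsq a) * sqrt (nsq b)" unfolding t_def using pa
        by (subst ea) (simp add: field_simps)
      moreover have "nsq b / t = sqrt (nsq a) * sqrt (nsq b)" unfolding t_def using pa pb
        by (subst eb) (simp add: field_simps)
      ultimately show ?thesis by simp
    qed
    finally show ?thesis .
  qed
  finally show ?thesis .
qed

lemma lim2:
  assumes "l2 x" "l2 y" "\<And>k. l2 (X k)" "\<And>k. l2 (Y k)"
    and "(\<lambda>k. nsq (\<lambda>n. X k n - x n)) \<longlonglongrightarrow> 0"
    and "(\<lambda>k. nsq (\<lambda>n. Y k n - y n)) \<longlonglongrightarrow> 0"
  shows "(\<lambda>k. ip (X k) (Y k)) \<longlonglongrightarrow> ip x y"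
proof -
  define dX where "dX k = (\<lambda>n. X k n - x n)" for k
  define dY where "dY k = (\<lambda>n. Y k n - y n)" for k
  have ldX: "l2 (dX k)" for k unfolding dX_def using assms by (intro l2_diff)
  have ldY: "l2 (dY k)" for k unfolding dY_def using assms by (intro l2_diff)
  have X: "X k = (\<lambda>n. dX k n + x n)" for k by (simp add: dX_def)
  have Y: "Y k = (\<lambda>n. dY k n + y n)" for k by (simp add: dY_def)
  have eq: "ip (X k) (Y k) - ip x y = ip (dX k) (dY k) + ip (dX k) y + ip x (dY k)" for k
  proof -
    have "ip (X k) (Y k) = ip (dX k) (Y k) + ip x (Y k)"
      unfolding X[of k] using ldX assms by (intro ip_add_left) (auto simp: X[symmetric])
    also have "ip (dX k) (Y k) = ip (dX k) (dY k) + ip (dX k) y"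
      unfolding Y[of k] using ldX ldY assms by (intro ip_add_right)
    also have "ip x (Y k) = ip x (dY k) + ip x y"
      unfolding Y[of k] using ldY assms by (intro ip_add_right)
    finally show ?thesis by simp
  qed
  have sX: "(\<lambda>k. sqrt (nsq (dX k))) \<longlonglongrightarrow> 0"
    using tendsto_real_sqrt[OF assms(5)] by (simp add: dX_def)
  have sY: "(\<lambda>k. sqrt (nsq (dY k))) \<longlonglongrightarrow> 0"
    using tendsto_real_sqrt[OF assms(6)] by (simp add: dY_def)
  have "(\<lambda>k. sqrt (nsq (dX k)) * sqrt (nsq (dY k)) + sqrt (nsq (dX k)) * sqrt (nsq y)
           + sqrt (nsq x) * sqrt (nsq (dY k))) \<longlonglongrightarrow> 0 * 0 + 0 * sqrt (nsq y) + sqrt (nsq x) * 0"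
    by (intro tendsto_intros sX sY)
  then have lim0: "(\<lambda>k. sqrt (nsq (dX k)) * sqrt (nsq (dY k)) + sqrt (nsq (dX k)) * sqrt (nsq y)
           + sqrt (nsq x) * sqrt (nsq (dY k))) \<longlonglongrightarrow> 0" by simp
  have "(\<lambda>k. ip (X k) (Y k) - ip x y) \<longlonglongrightarrow> 0"
  proof (rule Lim_null_comparison[OF _ lim0])
    show "\<forall>\<^sub>F k in sequentially. norm (ip (X k) (Y k) - ip x y) \<le>
      sqrt (nsq (dX k)) * sqrt (nsq (dY k)) + sqrt (nsq (dX k)) * sqrt (nsq y) + sqrt (nsq x) * sqrt (nsq (dY k))"
    proof (intro always_eventually allI)
      fix k
      have "norm (ip (X k) (Y k) - ip x y) \<le> norm (ip (dX k) (dY k)) + norm (ip (dX k) y) + norm (ip x (dY k))"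
      proof -
        have "norm (ip (dX k) (dY k) + ip (dX k) y + ip x (dY k)) \<le> norm (ip (dX k) (dY k) + ip (dX k) y) + norm (ip x (dY k))"
          by (rule norm_triangle_ineq)
        also have "\<dots> \<le> norm (ip (dX k) (dY k)) + norm (ip (dX k) y) + norm (ip x (dY k))"
          using norm_triangle_ineq[of "ip (dX k) (dY k)" "ip (dX k) y"] by simp
        finally show ?thesis unfolding eq .
      qed
      also have "\<dots> \<le> sqrt (nsq (dX k)) * sqrt (nsq (dY k)) + sqrt (nsq (dX k)) * sqrt (nsq y) + sqrt (nsq x) * sqrt (nsq (dY k))"
        using ldX ldY assms by (intro add_mono cauchy_schwarz)
      finally show "norm (ip (X k) (Y k) - ip x y) \<le> sqrt (nsq (dX k)) * sqrt (nsq (dY k)) + sqrt (nsq (dX k)) * sqrt (nsq y) + sqrt (nsq x) * sqrt (nsq (dY k))" .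
    qed
  qed
  then show ?thesis by (rule LIM_zero_cancel)
qed

abbreviation DD :: "complex set" where "DD \<equiv> ball 0 1"

lemma tc_cong:
  assumes "\<And>z. z \<in> DD \<Longrightarrow> f z = g z"
  shows "taylor_coeff f n = taylor_coeff g n"
proof -
  have "eventually (\<lambda>z. f z = g z) (nhds 0)"
    using eventually_nhds_in_open[of DD 0] by (rule eventually_mono) (use assms in auto)
  then have "(deriv ^^ n) f 0 = (deriv ^^ n) g 0" by (rule higher_deriv_cong_ev) simp
  then show ?thesis unfolding taylor_coeff_def by simp
qed

lemma tc_add:
  assumes "f holomorphic_on DD" "g holomorphic_on DD"
  shows "taylor_coeff (\<lambda>z. f z + g z) n = taylor_coeff f n + taylor_coeff g n"
  unfolding taylor_coeff_def using higher_deriv_add[OF assms, of 0 n] by (simp add: add_divide_distrib)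

lemma tc_diff:
  assumes "f holomorphic_on DD" "g holomorphic_on DD"
  shows "taylor_coeff (\<lambda>z. f z - g z) n = taylor_coeff f n - taylor_coeff g n"
  unfolding taylor_coeff_def using higher_deriv_diff[OF assms, of 0 n] by (simp add: diff_divide_distrib)

lemma tc_cmult:
  assumes "f holomorphic_on DD"
  shows "taylor_coeff (\<lambda>z. c * f z) n = c * taylor_coeff f n"
  unfolding taylor_coeff_def using higher_deriv_cmult[OF assms, of 0 n c] by simp

lemma tc_sum:
  assumes "\<And>i. i \<in> S \<Longrightarrow> F i holomorphic_on DD"
  shows "taylor_coeff (\<lambda>z. \<Sum>i\<in>S. F i z) n = (\<Sum>i\<in>S. taylor_coeff (F i) n)"
  using assms
proof (induction S rule: infinite_finite_induct)
  case (infinite A) then show ?case by (simp add: taylor_coeff_def)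
next
  case empty then show ?case by (simp add: taylor_coeff_def)
next
  case (insert x F')
  have "taylor_coeff (\<lambda>z. \<Sum>i\<in>insert x F'. F i z) n = taylor_coeff (\<lambda>z. F x z + (\<Sum>i\<in>F'. F i z)) n"
    using insert by simp
  also have "\<dots> = taylor_coeff (F x) n + taylor_coeff (\<lambda>z. \<Sum>i\<in>F'. F i z) n"
    using insert by (intro tc_add holomorphic_intros) auto
  finally show ?case using insert by simp
qed

lemma tc_powser:
  assumes "f holomorphic_on DD" "z \<in> DD"
  shows "(\<lambda>n. taylor_coeff f n * z ^ n) sums f z"
  using holomorphic_power_series[OF assms] unfolding taylor_coeff_def by simp

lemma tc_determines:
  assumes "f holomorphic_on DD" "g holomorphic_on DD" "\<And>n. taylor_coeff f n = taylor_coeff g n"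
    and "z \<in> DD"
  shows "f z = g z"
  using tc_powser[OF assms(1,4)] tc_powser[OF assms(2,4)] assms(3) sums_unique2 by auto

lemma tc_eval_fps:
  assumes "fps_conv_radius F > 0"
  shows "taylor_coeff (eval_fps F) n = fps_nth F n"
  unfolding taylor_coeff_def using fps_nth_conv_deriv[OF assms, of n] by simp

lemma tc_monom: "taylor_coeff (\<lambda>z. z ^ m) n = (if n = m then 1 else 0)"
proof -
  have e: "eval_fps (fps_X ^ m) = (\<lambda>z. z ^ m)" by (auto simp: eval_fps_X_power)
  have "taylor_coeff (\<lambda>z. z ^ m) n = fps_nth (fps_X ^ m) n"
    unfolding e[symmetric] by (rule tc_eval_fps) simp
  then show ?thesis by simp
qed

definition poly_of :: "(nat \<Rightarrow> complex) \<Rightarrow> nat \<Rightarrow> complex \<Rightarrow> complex" where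
  "poly_of a N z = (\<Sum>n<N. a n * z ^ n)"

lemma poly_of_holo: "poly_of a N holomorphic_on S"
  unfolding poly_of_def by (intro holomorphic_intros)

lemma tc_poly_of: "taylor_coeff (poly_of a N) n = (if n < N then a n else 0)"
proof -
  have "taylor_coeff (poly_of a N) n = (\<Sum>m<N. taylor_coeff (\<lambda>z. a m * z ^ m) n)"
    unfolding poly_of_def by (rule tc_sum) (intro holomorphic_intros)
  also have "\<dots> = (\<Sum>m<N. a m * (if n = m then 1 else 0))"
    by (intro sum.cong refl) (subst tc_cmult, auto intro!: holomorphic_intros simp: tc_monom)
  also have "\<dots> = (if n < N then a n else 0)"
    by (simp add: if_distrib cong: if_cong)
  finally show ?thesis .
qed

lemma l2_bounded:
  assumes "l2 a" shows "\<exists>K. \<forall>n. cmod (a n) \<le> K"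
proof -
  have "(\<lambda>n. (cmod (a n))\<^sup>2) \<longlonglongrightarrow> 0" using assms unfolding l2_def by (rule summable_LIMSEQ_zero)
  then have "bounded (range (\<lambda>n. (cmod (a n))\<^sup>2))" by (rule convergent_imp_bounded)
  then obtain K where K: "\<And>n. norm ((cmod (a n))\<^sup>2) \<le> K" by (auto simp: bounded_iff)
  have "cmod (a n) \<le> max 1 K" for n
  proof (cases "cmod (a n) \<le> 1")
    case False
    then have "cmod (a n) * 1 \<le> cmod (a n) * cmod (a n)" by (intro mult_left_mono) auto
    then have "cmod (a n) \<le> (cmod (a n))\<^sup>2" by (simp add: power2_eq_square)
    also have "\<dots> \<le> K" using K[of n] by simp
    finally show ?thesis by simp
  qed auto
  then show ?thesis by blast
qed

lemma conv_radius_l2: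
  assumes "l2 a" shows "fps_conv_radius (Abs_fps a) \<ge> 1"
  unfolding fps_conv_radius_def
proof (rule conv_radius_geI_ex')
  fix r :: real assume r: "0 < r" "ereal r < 1"
  obtain K where K: "\<And>n. cmod (a n) \<le> K" using l2_bounded[OF assms] by blast
  have r1: "r < 1" using r by simp
  show "summable (\<lambda>n. fps_nth (Abs_fps a) n * of_real r ^ n)"
  proof (rule summable_comparison_test')
    show "summable (\<lambda>n. K * r ^ n)" using r r1 by (intro summable_mult summable_geometric) auto
    fix n show "norm (fps_nth (Abs_fps a) n * of_real r ^ n) \<le> K * r ^ n"
      using K[of n] r by (auto simp: norm_mult norm_power intro!: mult_right_mono)
  qed
qed

lemma ereal_ge1_pos: "1 \<le> (R::ereal) \<Longrightarrow> 0 < R"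
  using order.strict_trans2[of 0 1 R] by simp

lemma ereal_ge1_less: "x < 1 \<Longrightarrow> 1 \<le> (R::ereal) \<Longrightarrow> ereal x < R"
proof -
  assume a: "x < 1" "1 \<le> R"
  have "ereal x < 1" using a(1) by (simp add: one_ereal_def)
  then show ?thesis using a(2) by (rule order.strict_trans2)
qed

definition fun_of :: "(nat \<Rightarrow> complex) \<Rightarrow> complex \<Rightarrow> complex" where
  "fun_of a z = (if z \<in> DD then eval_fps (Abs_fps a) z else 0)"

lemma fun_of_holo: assumes "l2 a" shows "fun_of a holomorphic_on DD"
proof -
  have "eval_fps (Abs_fps a) holomorphic_on DD"
    using conv_radius_l2[OF assms]
    by (intro holomorphic_on_eval_fps) (auto simp: subset_iff intro: ereal_ge1_less)
  then show ?thesis by (rule holomorphic_transform) (simp add: fun_of_def)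
qed

lemma tc_fun_of: assumes "l2 a" shows "taylor_coeff (fun_of a) n = a n"
proof -
  have "taylor_coeff (fun_of a) n = taylor_coeff (eval_fps (Abs_fps a)) n"
    by (rule tc_cong) (simp add: fun_of_def)
  also have "\<dots> = a n" using conv_radius_l2[OF assms]
    by (subst tc_eval_fps) (auto intro: ereal_ge1_pos)
  finally show ?thesis .
qed

lemma H2_iff: "f \<in> H2 \<longleftrightarrow> f holomorphic_on DD \<and> (\<forall>z. z \<notin> DD \<longrightarrow> f z = 0) \<and> l2 (taylor_coeff f)"
  unfolding H2_def l2_def by simp

lemma fun_of_H2: assumes "l2 a" shows "fun_of a \<in> H2"
proof -
  have "taylor_coeff (fun_of a) = a" using tc_fun_of[OF assms] by auto
  then show ?thesis unfolding H2_iff using fun_of_holo[OF assms] assms by (auto simp: fun_of_def)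
qed

lemma h2_inner_ip: "h2_inner f g = ip (taylor_coeff f) (taylor_coeff g)"
  unfolding h2_inner_def ip_def by simp

abbreviation MM :: "real measure" where "MM \<equiv> lebesgue_on {0..2*pi}"

lemma integral_MM_eq:
  fixes f :: "real \<Rightarrow> complex"
  assumes "continuous_on {0..2*pi} f"
  shows "integral\<^sup>L MM f = integral {0..2*pi} f"
  by (rule lebesgue_integral_eq_integral) (use continuous_imp_integrable_real[OF assms] in auto)

lemma cis_has_integral:
  fixes k :: real
  assumes "k \<in> \<int>" "k \<noteq> 0"
  shows "((\<lambda>t. cis (k * t)) has_integral 0) {0..2*pi}"
proof -
  define F where "F t = inverse (\<i> * of_real k) * cis (k * t)" for t
  have "((\<lambda>t. cis (k * t)) has_integral F (2*pi) - F 0) {0..2*pi}"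
  proof (rule fundamental_theorem_of_calculus)
    fix x :: real
    have "((\<lambda>t. cis (k * t)) has_derivative (\<lambda>t. (k * t) *\<^sub>R (\<i> * cis (k * x)))) (at x within {0..2*pi})"
      by (intro has_derivative_cis derivative_intros)
    then have "(F has_derivative (\<lambda>t. inverse (\<i> * of_real k) * ((k * t) *\<^sub>R (\<i> * cis (k * x))))) (at x within {0..2*pi})"
      unfolding F_def by (rule has_derivative_mult_right)
    moreover have "(\<lambda>t. inverse (\<i> * of_real k) * ((k * t) *\<^sub>R (\<i> * cis (k * x)))) = (\<lambda>t. t *\<^sub>R cis (k * x))"
      using assms(2) by (auto simp: scaleR_conv_of_real field_simps)
    ultimately show "(F has_vector_derivative cis (k * x)) (at x within {0..2*pi})"
      unfolding has_vector_derivative_def by simp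
  qed simp
  moreover have "F (2*pi) - F 0 = 0"
  proof -
    have "cis (k * (2*pi)) = 1" using assms(1) cis_multiple_2pi[of k] by (simp add: mult_ac)
    then show ?thesis by (simp add: F_def)
  qed
  ultimately show ?thesis by simp
qed

lemma integral_cis_orth:
  fixes n m :: nat
  shows "integral\<^sup>L MM (\<lambda>t. cis (real n * t) * cnj (cis (real m * t))) = (if n = m then of_real (2*pi) else 0)"
proof -
  have eq: "cis (real n * t) * cnj (cis (real m * t)) = cis ((real n - real m) * t)" for t
    by (simp add: cis_cnj cis_mult algebra_simps)
  have "integral\<^sup>L MM (\<lambda>t. cis (real n * t) * cnj (cis (real m * t))) = integral {0..2*pi} (\<lambda>t. cis ((real n - real m) * t))"
    unfolding eq by (rule integral_MM_eq) (intro continuous_intros)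
  also have "\<dots> = (if n = m then of_real (2*pi) else 0)"
  proof (cases "n = m")
    case True then show ?thesis by (simp add: scaleR_conv_of_real)
  next
    case False
    have "real n - real m \<in> \<int>" by simp
    moreover have "real n - real m \<noteq> 0" using False by simp
    ultimately show ?thesis using cis_has_integral False by (simp add: integral_unique)
  qed
  finally show ?thesis .
qed


lemma cont_circ:
  assumes "f holomorphic_on DD" "\<bar>r\<bar> < 1"
  shows "continuous_on {0..2*pi} (\<lambda>t. f (of_real r * cis t))"
proof (rule continuous_on_compose2[OF holomorphic_on_imp_continuous_on[OF assms(1)]])
  show "continuous_on {0..2*pi} (\<lambda>t. of_real r * cis t)" by (intro continuous_intros)
  show "(\<lambda>t. of_real r * cis t) ` {0..2*pi} \<subseteq> DD" using assms(2) by (auto simp: norm_mult)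
qed

lemma circ_pow: "(of_real r * cis t) ^ n = of_real (r^n) * cis (real n * t)"
  unfolding power_mult_distrib Complex.DeMoivre of_real_power ..

lemma poly_of_circ:
  "poly_of a N (of_real r * cis t) = (\<Sum>n<N. a n * of_real (r ^ n) * cis (real n * t))"
  unfolding poly_of_def circ_pow mult.assoc ..

lemma integral_poly_prod:
  "integral\<^sup>L MM (\<lambda>t. poly_of a N (of_real r * cis t) * cnj (poly_of b N (of_real r * cis t)))
     = of_real (2*pi) * (\<Sum>n<N. a n * cnj (b n) * of_real (r ^ (2*n)))"
proof -
  define c where "c n m = a n * cnj (b m) * of_real (r ^ n * r ^ m)" for n m
  have trm: "a n * of_real (r ^ n) * cis (real n * t) * (cnj (b m) * of_real (r ^ m) * cnj (cis (real m * t)))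
      = c n m * (cis (real n * t) * cnj (cis (real m * t)))" for n m t
    unfolding c_def of_real_mult by (simp only: mult_ac)
  have expand: "poly_of a N (of_real r * cis t) * cnj (poly_of b N (of_real r * cis t))
     = (\<Sum>n<N. \<Sum>m<N. c n m * (cis (real n * t) * cnj (cis (real m * t))))" for t
    unfolding poly_of_circ cnj_sum complex_cnj_mult complex_cnj_complex_of_real sum_product trm ..
  have int: "integrable MM (\<lambda>t. c n m * (cis (real n * t) * cnj (cis (real m * t))))" for n m
    by (intro continuous_imp_integrable_real continuous_intros)
  have "integral\<^sup>L MM (\<lambda>t. \<Sum>n<N. \<Sum>m<N. c n m * (cis (real n * t) * cnj (cis (real m * t))))
      = (\<Sum>n<N. integral\<^sup>L MM (\<lambda>t. \<Sum>m<N. c n m * (cis (real n * t) * cnj (cis (real m * t)))))"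
    by (rule Bochner_Integration.integral_sum) (intro Bochner_Integration.integrable_sum int)
  also have "\<dots> = (\<Sum>n<N. \<Sum>m<N. integral\<^sup>L MM (\<lambda>t. c n m * (cis (real n * t) * cnj (cis (real m * t)))))"
    by (intro sum.cong refl Bochner_Integration.integral_sum int)
  also have "\<dots> = (\<Sum>n<N. \<Sum>m<N. c n m * (if n = m then of_real (2*pi) else 0))"
    unfolding integral_mult_right_zero integral_cis_orth ..
  also have "\<dots> = (\<Sum>n<N. c n n * of_real (2*pi))"
  proof (intro sum.cong refl)
    fix n assume "n \<in> {..<N}"
    then show "(\<Sum>m<N. c n m * (if n = m then of_real (2*pi) else 0)) = c n n * of_real (2*pi)"
      by (simp add: if_distrib[of "\<lambda>x. c n _ * x"] sum.delta cong: if_cong)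
  qed
  also have "\<dots> = of_real (2*pi) * (\<Sum>n<N. a n * cnj (b n) * of_real (r ^ (2*n)))"
    unfolding sum_distrib_left
  proof (intro sum.cong refl)
    fix n
    have "r ^ n * r ^ n = r ^ (2*n)" unfolding mult_2 power_add ..
    then show "c n n * of_real (2*pi) = of_real (2*pi) * (a n * cnj (b n) * of_real (r ^ (2*n)))"
      unfolding c_def by (simp only: mult_ac)
  qed
  finally show ?thesis unfolding expand .
qed

lemma abs_coeff_summable:
  assumes "f holomorphic_on DD" "0 \<le> r" "r < 1"
  shows "summable (\<lambda>n. cmod (taylor_coeff f n) * r ^ n)"
proof -
  define \<rho> where "\<rho> = (1 + r) / 2"
  have \<rho>: "\<rho> < 1" "r < \<rho>" using assms by (auto simp: \<rho>_def)
  have "of_real \<rho> \<in> DD" using \<rho> assms by simp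
  then have "summable (\<lambda>n. taylor_coeff f n * of_real \<rho> ^ n)"
    using tc_powser[OF assms(1)] sums_summable by blast
  then have "summable (\<lambda>n. norm (taylor_coeff f n * of_real r ^ n))"
    by (rule powser_insidea) (use assms \<rho> in simp)
  then show ?thesis by (simp add: norm_mult norm_power abs_of_nonneg assms(2))
qed

lemma term_le_suminf:
  fixes x :: "nat \<Rightarrow> real"
  assumes "summable x" "\<And>n. x n \<ge> 0"
  shows "x n \<le> suminf x"
  using sum_le_suminf[OF assms(1), of "{n}"] assms(2) by simp

lemma poly_of_circ_bound:
  assumes "summable (\<lambda>n. cmod (a n) * r ^ n)" "0 \<le> r"
  shows "cmod (poly_of a N (of_real r * cis t)) \<le> (\<Sum>n. cmod (a n) * r ^ n)"
proof -
  have "cmod (poly_of a N (of_real r * cis t)) \<le> (\<Sum>n<N. cmod (a n * (of_real r * cis t) ^ n))"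
    unfolding poly_of_def by (rule norm_sum)
  also have "\<dots> = (\<Sum>n<N. cmod (a n) * r ^ n)"
    using assms(2) by (simp add: norm_mult norm_power)
  also have "\<dots> \<le> (\<Sum>n. cmod (a n) * r ^ n)"
    by (rule sum_le_suminf[OF assms(1)]) (use assms(2) in auto)
  finally show ?thesis .
qed

lemma parseval_r:
  assumes f: "f holomorphic_on DD" and g: "g holomorphic_on DD" and r: "0 \<le> r" "r < 1"
  shows "summable (\<lambda>n. taylor_coeff f n * cnj (taylor_coeff g n) * of_real (r ^ (2*n)))"
    and "integral\<^sup>L MM (\<lambda>t. f (of_real r * cis t) * cnj (g (of_real r * cis t)))
         = of_real (2*pi) * (\<Sum>n. taylor_coeff f n * cnj (taylor_coeff g n) * of_real (r ^ (2*n)))"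
proof -
  define a where "a = taylor_coeff f"
  define b where "b = taylor_coeff g"
  have sa: "summable (\<lambda>n. cmod (a n) * r ^ n)" unfolding a_def by (rule abs_coeff_summable[OF f r])
  have sb: "summable (\<lambda>n. cmod (b n) * r ^ n)" unfolding b_def by (rule abs_coeff_summable[OF g r])
  define A where "A = (\<Sum>n. cmod (a n) * r ^ n)"
  define B where "B = (\<Sum>n. cmod (b n) * r ^ n)"
  have B: "cmod (b n) * r ^ n \<le> B" for n
    unfolding B_def by (rule term_le_suminf[OF sb]) (use r in auto)
  have A0: "A \<ge> 0" unfolding A_def by (rule suminf_nonneg[OF sa]) (use r in auto)
  have sum1: "summable (\<lambda>n. a n * cnj (b n) * of_real (r ^ (2*n)))"
  proof (rule summable_comparison_test')
    show "summable (\<lambda>n. (cmod (a n) * r ^ n) * B)" using sa by (rule summable_mult2)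
    fix n
    have "norm (a n * cnj (b n) * of_real (r ^ (2*n))) = (cmod (a n) * r ^ n) * (cmod (b n) * r ^ n)"
      using r by (simp add: norm_mult norm_power mult_2 power_add abs_of_nonneg)
    also have "\<dots> \<le> (cmod (a n) * r ^ n) * B" using B[of n] r by (intro mult_left_mono) auto
    finally show "norm (a n * cnj (b n) * of_real (r ^ (2*n))) \<le> (cmod (a n) * r ^ n) * B" .
  qed
  then show "summable (\<lambda>n. taylor_coeff f n * cnj (taylor_coeff g n) * of_real (r ^ (2*n)))"
    by (simp add: a_def b_def)
  define s where "s N t = poly_of a N (of_real r * cis t) * cnj (poly_of b N (of_real r * cis t))" for N t
  define F where "F t = f (of_real r * cis t) * cnj (g (of_real r * cis t))" for t
  have rr: "\<bar>r\<bar> < 1" using r by simp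
  have lim1: "(\<lambda>N. integral\<^sup>L MM (s N)) \<longlonglongrightarrow> integral\<^sup>L MM F"
  proof (rule integral_dominated_convergence[where w = "\<lambda>_. A * B"])
    show "F \<in> borel_measurable MM" unfolding F_def
      by (intro continuous_imp_measurable_on_sets_lebesgue continuous_intros cont_circ[OF f rr] cont_circ[OF g rr]) auto
    show "s N \<in> borel_measurable MM" for N unfolding s_def poly_of_def
      by (intro continuous_imp_measurable_on_sets_lebesgue continuous_intros) auto
    show "integrable MM (\<lambda>_. A * B)" by (intro continuous_imp_integrable_real continuous_intros)
    show "AE t in MM. (\<lambda>N. s N t) \<longlonglongrightarrow> F t"
    proof (intro always_eventually allI)
      fix t
      have z: "of_real r * cis t \<in> DD" using rr by (simp add: norm_mult)
      have "(\<lambda>N. poly_of a N (of_real r * cis t)) \<longlonglongrightarrow> f (of_real r * cis t)"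
        using tc_powser[OF f z] unfolding sums_def poly_of_def a_def .
      moreover have "(\<lambda>N. poly_of b N (of_real r * cis t)) \<longlonglongrightarrow> g (of_real r * cis t)"
        using tc_powser[OF g z] unfolding sums_def poly_of_def b_def .
      ultimately show "(\<lambda>N. s N t) \<longlonglongrightarrow> F t" unfolding s_def F_def
        by (intro tendsto_intros)
    qed
    show "AE t in MM. norm (s N t) \<le> A * B" for N
    proof (intro always_eventually allI)
      fix t
      show "norm (s N t) \<le> A * B" unfolding s_def norm_mult complex_mod_cnj A_def B_def
        by (intro mult_mono poly_of_circ_bound sa sb r) (auto intro: order.trans[OF norm_ge_zero poly_of_circ_bound[OF sa r(1)]])
    qed
  qed
  have lim2: "(\<lambda>N. integral\<^sup>L MM (s N)) \<longlonglongrightarrow> of_real (2*pi) * (\<Sum>n. a n * cnj (b n) * of_real (r ^ (2*n)))"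
    unfolding s_def integral_poly_prod
    by (intro tendsto_intros summable_LIMSEQ sum1)
  have FF: "F = (\<lambda>t. f (of_real r * cis t) * cnj (g (of_real r * cis t)))" by (rule ext) (simp add: F_def)
  from LIMSEQ_unique[OF lim1 lim2] show "integral\<^sup>L MM (\<lambda>t. f (of_real r * cis t) * cnj (g (of_real r * cis t)))
         = of_real (2*pi) * (\<Sum>n. taylor_coeff f n * cnj (taylor_coeff g n) * of_real (r ^ (2*n)))"
    unfolding FF a_def b_def by simp
qed

lemma sq_coeff_summable:
  assumes "f holomorphic_on DD" "0 \<le> r" "r < 1"
  shows "summable (\<lambda>n. (cmod (taylor_coeff f n))\<^sup>2 * r ^ (2*n))"
proof -
  define a where "a = taylor_coeff f"
  have sa: "summable (\<lambda>n. cmod (a n) * r ^ n)" unfolding a_def by (rule abs_coeff_summable[OF assms])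
  define A where "A = (\<Sum>n. cmod (a n) * r ^ n)"
  have A: "cmod (a n) * r ^ n \<le> A" for n
    unfolding A_def by (rule term_le_suminf[OF sa]) (use assms in auto)
  have "summable (\<lambda>n. (cmod (a n))\<^sup>2 * r ^ (2*n))"
  proof (rule summable_comparison_test')
    show "summable (\<lambda>n. (cmod (a n) * r ^ n) * A)" using sa by (rule summable_mult2)
    fix n
    have "norm ((cmod (a n))\<^sup>2 * r ^ (2*n)) = (cmod (a n) * r ^ n) * (cmod (a n) * r ^ n)"
      using assms by (simp add: power2_eq_square mult_2 power_add abs_of_nonneg)
    also have "\<dots> \<le> (cmod (a n) * r ^ n) * A" using A[of n] assms by (intro mult_left_mono) auto
    finally show "norm ((cmod (a n))\<^sup>2 * r ^ (2*n)) \<le> (cmod (a n) * r ^ n) * A" .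
  qed
  then show ?thesis by (simp add: a_def)
qed

lemma parseval_norm:
  assumes f: "f holomorphic_on DD" and r: "0 \<le> r" "r < 1"
  shows "integral\<^sup>L MM (\<lambda>t. (cmod (f (of_real r * cis t)))\<^sup>2)
         = 2 * pi * (\<Sum>n. (cmod (taylor_coeff f n))\<^sup>2 * r ^ (2*n))"
proof -
  have "complex_of_real (integral\<^sup>L MM (\<lambda>t. (cmod (f (of_real r * cis t)))\<^sup>2))
      = integral\<^sup>L MM (\<lambda>t. f (of_real r * cis t) * cnj (f (of_real r * cis t)))"
    by (simp only: integral_complex_of_real[symmetric] complex_norm_square)
  also have "\<dots> = of_real (2*pi) * (\<Sum>n. taylor_coeff f n * cnj (taylor_coeff f n) * of_real (r ^ (2*n)))"
    by (rule parseval_r(2)[OF f f r])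
  also have "(\<Sum>n. taylor_coeff f n * cnj (taylor_coeff f n) * of_real (r ^ (2*n)))
      = (\<Sum>n. complex_of_real ((cmod (taylor_coeff f n))\<^sup>2 * r ^ (2*n)))"
    by (simp only: of_real_mult complex_norm_square)
  also have "\<dots> = of_real (\<Sum>n. (cmod (taylor_coeff f n))\<^sup>2 * r ^ (2*n))"
    by (rule suminf_of_real[symmetric, OF sq_coeff_summable[OF f r]])
  finally show ?thesis by (simp only: of_real_mult[symmetric] of_real_eq_iff)
qed

lemma radial_limit_bound:
  fixes x :: "nat \<Rightarrow> real"
  assumes nn: "\<And>n. x n \<ge> 0"
    and H: "\<And>r. 0 \<le> r \<Longrightarrow> r < 1 \<Longrightarrow> summable (\<lambda>n. x n * r ^ (2*n)) \<and> (\<Sum>n. x n * r ^ (2*n)) \<le> K"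
  shows "summable x" "suminf x \<le> K"
proof -
  have fin: "(\<Sum>n<N. x n) \<le> K" for N
  proof -
    have lim: "((\<lambda>r. \<Sum>n<N. x n * r ^ (2*n)) \<longlongrightarrow> (\<Sum>n<N. x n * 1 ^ (2*n))) (at_left 1)"
      by (intro tendsto_intros)
    have ev: "eventually (\<lambda>r. (\<Sum>n<N. x n * r ^ (2*n)) \<le> K) (at_left (1::real))"
    proof -
      have "eventually (\<lambda>r::real. r \<in> {0<..<1}) (at_left 1)"
        by (rule eventually_at_left_real) simp
      then show ?thesis
      proof eventually_elim
        case (elim r)
        have "(\<Sum>n<N. x n * r ^ (2*n)) \<le> (\<Sum>n. x n * r ^ (2*n))"
          using H[of r] elim nn by (intro sum_le_suminf) auto
        also have "\<dots> \<le> K" using H[of r] elim by auto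
        finally show ?case .
      qed
    qed
    have "(\<Sum>n<N. x n * 1 ^ (2*n)) \<le> K"
      by (rule tendsto_upperbound[OF lim ev]) simp
    then show ?thesis by simp
  qed
  show "summable x" by (rule summableI_nonneg_bounded[OF nn fin])
  show "suminf x \<le> K" by (rule suminf_le_const[OF \<open>summable x\<close> fin])
qed

lemma bounded_mult:
  assumes v: "v holomorphic_on DD" and K: "\<And>z. z \<in> DD \<Longrightarrow> cmod (v z) \<le> K"
    and f: "f holomorphic_on DD" and lf: "l2 (taylor_coeff f)"
  shows "l2 (taylor_coeff (\<lambda>z. v z * f z))"
    and "nsq (taylor_coeff (\<lambda>z. v z * f z)) \<le> K\<^sup>2 * nsq (taylor_coeff f)"
proof -
  define F where "F = (\<lambda>z. v z * f z)"
  have F: "F holomorphic_on DD" unfolding F_def using v f by (intro holomorphic_intros)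
  have K0: "K \<ge> 0" using K[of 0] by (auto intro: order.trans[OF norm_ge_zero])
  have H: "summable (\<lambda>n. (cmod (taylor_coeff F n))\<^sup>2 * r ^ (2*n)) \<and>
        (\<Sum>n. (cmod (taylor_coeff F n))\<^sup>2 * r ^ (2*n)) \<le> K\<^sup>2 * nsq (taylor_coeff f)"
    if r: "0 \<le> r" "r < 1" for r
  proof
    show "summable (\<lambda>n. (cmod (taylor_coeff F n))\<^sup>2 * r ^ (2*n))" by (rule sq_coeff_summable[OF F r])
    have rr: "\<bar>r\<bar> < 1" using r by simp
    have "2 * pi * (\<Sum>n. (cmod (taylor_coeff F n))\<^sup>2 * r ^ (2*n))
        = integral\<^sup>L MM (\<lambda>t. (cmod (F (of_real r * cis t)))\<^sup>2)"
      by (rule parseval_norm[OF F r, symmetric])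
    also have "\<dots> \<le> integral\<^sup>L MM (\<lambda>t. K\<^sup>2 * (cmod (f (of_real r * cis t)))\<^sup>2)"
    proof (rule integral_mono)
      show "integrable MM (\<lambda>t. (cmod (F (of_real r * cis t)))\<^sup>2)"
        by (intro continuous_imp_integrable_real continuous_intros cont_circ[OF F rr])
      show "integrable MM (\<lambda>t. K\<^sup>2 * (cmod (f (of_real r * cis t)))\<^sup>2)"
        by (intro continuous_imp_integrable_real continuous_intros cont_circ[OF f rr])
      fix t
      have "of_real r * cis t \<in> DD" using rr by (simp add: norm_mult)
      then have "cmod (v (of_real r * cis t)) \<le> K" by (rule K)
      then have "cmod (F (of_real r * cis t)) \<le> K * cmod (f (of_real r * cis t))"
        unfolding F_def norm_mult by (intro mult_right_mono) auto
      then have "(cmod (F (of_real r * cis t)))\<^sup>2 \<le> (K * cmod (f (of_real r * cis t)))\<^sup>2"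
        by (intro power_mono) auto
      then show "(cmod (F (of_real r * cis t)))\<^sup>2 \<le> K\<^sup>2 * (cmod (f (of_real r * cis t)))\<^sup>2"
        by (simp add: power_mult_distrib)
    qed
    also have "\<dots> = K\<^sup>2 * (2 * pi * (\<Sum>n. (cmod (taylor_coeff f n))\<^sup>2 * r ^ (2*n)))"
      by (simp add: parseval_norm[OF f r])
    also have "(\<Sum>n. (cmod (taylor_coeff f n))\<^sup>2 * r ^ (2*n)) \<le> nsq (taylor_coeff f)"
      unfolding nsq_def
    proof (rule suminf_le)
      show "summable (\<lambda>n. (cmod (taylor_coeff f n))\<^sup>2 * r ^ (2*n))" by (rule sq_coeff_summable[OF f r])
      show "summable (\<lambda>n. (cmod (taylor_coeff f n))\<^sup>2)" using lf by (simp add: l2_def)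
      fix n
      have "r ^ (2*n) \<le> 1" using r by (intro power_le_one) auto
      then show "(cmod (taylor_coeff f n))\<^sup>2 * r ^ (2*n) \<le> (cmod (taylor_coeff f n))\<^sup>2"
        by (intro mult_left_le) auto
    qed
    then have "K\<^sup>2 * (2 * pi * (\<Sum>n. (cmod (taylor_coeff f n))\<^sup>2 * r ^ (2*n))) \<le> K\<^sup>2 * (2 * pi * nsq (taylor_coeff f))"
      by (intro mult_left_mono) auto
    finally show "(\<Sum>n. (cmod (taylor_coeff F n))\<^sup>2 * r ^ (2*n)) \<le> K\<^sup>2 * nsq (taylor_coeff f)"
      by (simp add: algebra_simps)
  qed
  have "summable (\<lambda>n. (cmod (taylor_coeff F n))\<^sup>2)" "(\<Sum>n. (cmod (taylor_coeff F n))\<^sup>2) \<le> K\<^sup>2 * nsq (taylor_coeff f)"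
    by (rule radial_limit_bound[OF _ H]; simp)+
  then show "l2 (taylor_coeff (\<lambda>z. v z * f z))" "nsq (taylor_coeff (\<lambda>z. v z * f z)) \<le> K\<^sup>2 * nsq (taylor_coeff f)"
    unfolding F_def l2_def nsq_def by auto
qed

lemma abel_seq:
  fixes x :: "nat \<Rightarrow> complex"
  assumes sx: "summable (\<lambda>n. norm (x n))" and rho: "\<rho> \<longlonglongrightarrow> 1" and r01: "\<And>k. 0 \<le> \<rho> k \<and> \<rho> k \<le> 1"
  shows "(\<lambda>k. \<Sum>n. x n * of_real (\<rho> k ^ (2*n))) \<longlonglongrightarrow> (\<Sum>n. x n)"
proof -
  define g where "g r = (\<Sum>n. x n * of_real (r ^ (2*n)))" for r :: real
  have ul: "uniform_limit {0..1} (\<lambda>N r. \<Sum>n<N. x n * of_real (r ^ (2*n))) g sequentially"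
    unfolding g_def
  proof (rule Weierstrass_m_test[OF _ sx])
    fix n and r :: real assume "r \<in> {0..1}"
    then have "\<bar>r ^ (2*n)\<bar> \<le> 1" by (auto simp: abs_le_iff power_le_one intro: order.trans[of _ 0])
    moreover have "norm (x n * of_real (r ^ (2*n))) = norm (x n) * \<bar>r ^ (2*n)\<bar>"
      by (simp only: norm_mult norm_of_real)
    ultimately show "norm (x n * of_real (r ^ (2*n))) \<le> norm (x n)"
      by (simp add: mult_left_le)
  qed
  have "continuous_on {0..1} g"
    by (rule uniform_limit_theorem[OF _ ul]) (auto intro!: always_eventually continuous_intros)
  then have "(\<lambda>k. g (\<rho> k)) \<longlonglongrightarrow> g 1"
    by (rule continuous_on_tendsto_compose[OF _ rho]) (use r01 in auto)
  then show ?thesis by (simp add: g_def)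
qed

lemma poly_of_bound:
  assumes "cmod z \<le> 1"
  shows "cmod (poly_of a N z) \<le> (\<Sum>n<N. cmod (a n))"
proof -
  have "cmod (poly_of a N z) \<le> (\<Sum>n<N. cmod (a n * z ^ n))"
    unfolding poly_of_def by (rule norm_sum)
  also have "\<dots> \<le> (\<Sum>n<N. cmod (a n))"
  proof (intro sum_mono)
    fix n
    have "cmod z ^ n \<le> 1" using assms by (intro power_le_one) auto
    then show "cmod (a n * z ^ n) \<le> cmod (a n)" by (simp add: norm_mult norm_power mult_left_le)
  qed
  finally show ?thesis .
qed

lemma l2_poly_of: "l2 (taylor_coeff (poly_of a N))"
  by (rule l2_finite_support[of N]) (simp add: tc_poly_of)

lemma inner_fun_bound:
  assumes "inner_fun v"
  obtains K where "K > 0" "\<And>z. z \<in> DD \<Longrightarrow> cmod (v z) \<le> K"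
  using assms unfolding inner_fun_def bounded_pos by auto

lemma iso_poly:
  assumes inn: "inner_fun v"
  shows "h2_inner (\<lambda>z. v z * poly_of a N z) (\<lambda>z. v z * poly_of b N z) = (\<Sum>n<N. a n * cnj (b n))"
proof -
  have v: "v holomorphic_on DD" using inn unfolding inner_fun_def by auto
  have ae: "AE t in MM. \<exists>L. ((\<lambda>r. v (complex_of_real r * cis t)) \<longlongrightarrow> L) (at_left 1) \<and> norm L = 1"
    using inn unfolding inner_fun_def by auto
  obtain K where K0: "K > 0" and K: "\<And>z. z \<in> DD \<Longrightarrow> cmod (v z) \<le> K"
    using inner_fun_bound[OF inn] by blast
  define F where "F = (\<lambda>z. v z * poly_of a N z)"
  define G where "G = (\<lambda>z. v z * poly_of b N z)"
  have F: "F holomorphic_on DD" unfolding F_def using v by (intro holomorphic_intros poly_of_holo)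
  have G: "G holomorphic_on DD" unfolding G_def using v by (intro holomorphic_intros poly_of_holo)
  have lF: "l2 (taylor_coeff F)" unfolding F_def by (rule bounded_mult(1)[OF v K poly_of_holo l2_poly_of])
  have lG: "l2 (taylor_coeff G)" unfolding G_def by (rule bounded_mult(1)[OF v K poly_of_holo l2_poly_of])
  define S where "S = ip (taylor_coeff F) (taylor_coeff G)"
  define \<rho> where "\<rho> k = 1 - 1 / (real k + 2)" for k
  have r01: "0 \<le> \<rho> k \<and> \<rho> k < 1" for k unfolding \<rho>_def by (auto simp: field_simps)
  have rho: "\<rho> \<longlonglongrightarrow> 1"
  proof -
    have "(\<lambda>k. 1 - 1 / (real k + 2)) \<longlonglongrightarrow> 1 - 0"
    proof (intro tendsto_intros tendsto_divide_0[OF tendsto_const])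
      have "filterlim (\<lambda>x. real x + 2) at_top sequentially"
        by (rule filterlim_at_top_mono[OF filterlim_real_sequentially]) auto
      then show "filterlim (\<lambda>x. real x + 2) at_infinity sequentially"
        by (rule filterlim_at_top_imp_at_infinity)
    qed
    moreover have "\<rho> = (\<lambda>k. 1 - 1 / (real k + 2))" by (rule ext) (simp add: \<rho>_def)
    ultimately show ?thesis by simp
  qed
  have rho_left: "filterlim \<rho> (at_left 1) sequentially"
    by (rule tendsto_imp_filterlim_at_left[OF rho]) (use r01 in auto)
  define s where "s k t = F (of_real (\<rho> k) * cis t) * cnj (G (of_real (\<rho> k) * cis t))" for k t
  define P where "P t = poly_of a N (of_real 1 * cis t) * cnj (poly_of b N (of_real 1 * cis t))" for t
  have lim1: "(\<lambda>k. integral\<^sup>L MM (s k)) \<longlonglongrightarrow> of_real (2*pi) * S"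
  proof -
    have "(\<lambda>k. \<Sum>n. taylor_coeff F n * cnj (taylor_coeff G n) * of_real (\<rho> k ^ (2*n))) \<longlonglongrightarrow> S"
      unfolding S_def ip_def
      by (rule abel_seq[OF ip_summable_norm[OF lF lG] rho]) (use r01 in \<open>auto intro: less_imp_le\<close>)
    then have "(\<lambda>k. of_real (2*pi) * (\<Sum>n. taylor_coeff F n * cnj (taylor_coeff G n) * of_real (\<rho> k ^ (2*n))))
        \<longlonglongrightarrow> of_real (2*pi) * S" by (intro tendsto_intros)
    moreover have "integral\<^sup>L MM (s k) = of_real (2*pi) * (\<Sum>n. taylor_coeff F n * cnj (taylor_coeff G n) * of_real (\<rho> k ^ (2*n)))" for k
      unfolding s_def using parseval_r(2)[OF F G, of "\<rho> k"] r01[of k] by auto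
    ultimately show ?thesis by simp
  qed
  define PA where "PA = (\<Sum>n<N. cmod (a n))"
  define PB where "PB = (\<Sum>n<N. cmod (b n))"
  have lim2: "(\<lambda>k. integral\<^sup>L MM (s k)) \<longlonglongrightarrow> integral\<^sup>L MM P"
  proof (rule integral_dominated_convergence[where w = "\<lambda>_. (K * PA) * (K * PB)"])
    show "P \<in> borel_measurable MM" unfolding P_def poly_of_def
      by (intro continuous_imp_measurable_on_sets_lebesgue continuous_intros) auto
    show "s k \<in> borel_measurable MM" for k
    proof -
      have rr: "\<bar>\<rho> k\<bar> < 1" using r01[of k] by auto
      show ?thesis unfolding s_def
        by (intro continuous_imp_measurable_on_sets_lebesgue continuous_intros cont_circ[OF F rr] cont_circ[OF G rr]) auto
    qed
    show "integrable MM (\<lambda>_. (K * PA) * (K * PB))" by (intro continuous_imp_integrable_real continuous_intros)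
    show "AE t in MM. norm (s k t) \<le> (K * PA) * (K * PB)" for k
    proof (intro always_eventually allI)
      fix t
      have z: "of_real (\<rho> k) * cis t \<in> DD" and z1: "cmod (of_real (\<rho> k) * cis t) \<le> 1"
        using r01[of k] by (auto simp: norm_mult)
      have "norm (F (of_real (\<rho> k) * cis t)) \<le> K * PA"
        unfolding F_def norm_mult PA_def
        by (intro mult_mono K z poly_of_bound z1) (auto intro: order.trans[OF norm_ge_zero K[OF z]])
      moreover have "norm (G (of_real (\<rho> k) * cis t)) \<le> K * PB"
        unfolding G_def norm_mult PB_def
        by (intro mult_mono K z poly_of_bound z1) (auto intro: order.trans[OF norm_ge_zero K[OF z]])
      ultimately show "norm (s k t) \<le> (K * PA) * (K * PB)"
        unfolding s_def norm_mult complex_mod_cnj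
        by (intro mult_mono) (auto intro: order.trans[OF norm_ge_zero])
    qed
    show "AE t in MM. (\<lambda>k. s k t) \<longlonglongrightarrow> P t"
      using ae
    proof eventually_elim
      case (elim t)
      then obtain L where L: "((\<lambda>r. v (complex_of_real r * cis t)) \<longlongrightarrow> L) (at_left 1)" and nL: "norm L = 1"
        by blast
      have vl: "(\<lambda>k. v (of_real (\<rho> k) * cis t)) \<longlonglongrightarrow> L"
        using filterlim_compose[OF L rho_left] .
      have pa: "(\<lambda>k. poly_of a N (of_real (\<rho> k) * cis t)) \<longlonglongrightarrow> poly_of a N (of_real 1 * cis t)"
        unfolding poly_of_def by (intro tendsto_intros rho)
      have pb: "(\<lambda>k. poly_of b N (of_real (\<rho> k) * cis t)) \<longlonglongrightarrow> poly_of b N (of_real 1 * cis t)"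
        unfolding poly_of_def by (intro tendsto_intros rho)
      have "(\<lambda>k. s k t) \<longlonglongrightarrow> (L * poly_of a N (of_real 1 * cis t)) * cnj (L * poly_of b N (of_real 1 * cis t))"
        unfolding s_def F_def G_def by (intro tendsto_intros vl pa pb)
      also have "(L * poly_of a N (of_real 1 * cis t)) * cnj (L * poly_of b N (of_real 1 * cis t))
          = (L * cnj L) * P t" unfolding P_def by (simp add: mult_ac)
      also have "L * cnj L = 1" using nL complex_norm_square[of L] by simp
      finally show ?case by simp
    qed
  qed
  have "integral\<^sup>L MM P = of_real (2*pi) * (\<Sum>n<N. a n * cnj (b n) * of_real (1 ^ (2*n)))"
    unfolding P_def by (rule integral_poly_prod)
  then have "of_real (2*pi) * S = of_real (2*pi) * (\<Sum>n<N. a n * cnj (b n))"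
    using LIMSEQ_unique[OF lim1 lim2] by simp
  then have "S = (\<Sum>n<N. a n * cnj (b n))" by simp
  then show ?thesis unfolding S_def F_def G_def h2_inner_ip .
qed

lemma tail_to_zero:
  assumes "l2 a"
  shows "(\<lambda>N. nsq (\<lambda>n. (if n < N then a n else 0) - a n)) \<longlonglongrightarrow> 0"
proof -
  define x where "x n = (cmod (a n))\<^sup>2" for n
  have sx: "summable x" using assms unfolding l2_def x_def by simp
  have eq: "nsq (\<lambda>n. (if n < N then a n else 0) - a n) = suminf x - (\<Sum>n<N. x n)" for N
  proof -
    have "nsq (\<lambda>n. (if n < N then a n else 0) - a n) = (\<Sum>n. x n - (if n < N then x n else 0))"
      unfolding nsq_def x_def by (intro suminf_cong) auto
    also have "\<dots> = suminf x - (\<Sum>n. (if n < N then x n else 0))"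
    proof (rule suminf_diff[OF sx, symmetric])
      show "summable (\<lambda>n. if n < N then x n else 0)" by (rule summable_finite[of "{..<N}"]) auto
    qed
    also have "(\<Sum>n. (if n < N then x n else 0)) = (\<Sum>n<N. x n)"
      by (subst suminf_finite[of "{..<N}"]) auto
    finally show ?thesis .
  qed
  have "(\<lambda>N. suminf x - (\<Sum>n<N. x n)) \<longlonglongrightarrow> suminf x - suminf x"
    by (intro tendsto_intros summable_LIMSEQ sx)
  then show ?thesis unfolding eq by simp
qed

lemma approx_mult:
  assumes v: "v holomorphic_on DD" and K: "\<And>z. z \<in> DD \<Longrightarrow> cmod (v z) \<le> K"
    and f: "f holomorphic_on DD" and lf: "l2 (taylor_coeff f)"
  shows "(\<lambda>N. nsq (\<lambda>n. taylor_coeff (\<lambda>z. v z * poly_of (taylor_coeff f) N z) n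
                      - taylor_coeff (\<lambda>z. v z * f z) n)) \<longlonglongrightarrow> 0"
proof -
  define a where "a = taylor_coeff f"
  define D where "D N = (\<lambda>z. poly_of a N z - f z)" for N
  have hD: "D N holomorphic_on DD" for N unfolding D_def using f by (intro holomorphic_intros poly_of_holo)
  have tD: "taylor_coeff (D N) n = (if n < N then a n else 0) - a n" for N n
    unfolding D_def by (subst tc_diff[OF poly_of_holo f]) (simp add: tc_poly_of a_def)
  have lD: "l2 (taylor_coeff (D N))" for N
  proof -
    have "taylor_coeff (D N) = (\<lambda>n. (if n < N then a n else 0) - a n)" by (rule ext) (simp add: tD)
    then show ?thesis using l2_diff[OF l2_finite_support[of N "\<lambda>n. if n < N then a n else 0"] lf]
      by (simp add: a_def)
  qed
  have eqf: "(\<lambda>n. taylor_coeff (\<lambda>z. v z * poly_of a N z) n - taylor_coeff (\<lambda>z. v z * f z) n)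
        = taylor_coeff (\<lambda>z. v z * D N z)" for N
  proof (rule ext)
    fix n
    have "taylor_coeff (\<lambda>z. v z * poly_of a N z) n - taylor_coeff (\<lambda>z. v z * f z) n
        = taylor_coeff (\<lambda>z. v z * poly_of a N z - v z * f z) n"
    proof -
      have h1: "(\<lambda>z. v z * poly_of a N z) holomorphic_on DD" using v by (intro holomorphic_intros poly_of_holo)
      have h2: "(\<lambda>z. v z * f z) holomorphic_on DD" using v f by (intro holomorphic_intros)
      show ?thesis by (rule tc_diff[OF h1 h2, symmetric])
    qed
    also have "(\<lambda>z. v z * poly_of a N z - v z * f z) = (\<lambda>z. v z * D N z)"
      by (rule ext) (simp add: D_def right_diff_distrib)
    finally show "taylor_coeff (\<lambda>z. v z * poly_of a N z) n - taylor_coeff (\<lambda>z. v z * f z) n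
        = taylor_coeff (\<lambda>z. v z * D N z) n" .
  qed
  have bd: "nsq (taylor_coeff (\<lambda>z. v z * D N z)) \<le> K\<^sup>2 * nsq (\<lambda>n. (if n < N then a n else 0) - a n)" for N
  proof -
    have "taylor_coeff (D N) = (\<lambda>n. (if n < N then a n else 0) - a n)" by (rule ext) (simp add: tD)
    then show ?thesis using bounded_mult(2)[OF v K hD lD, of N] by simp
  qed
  have "(\<lambda>N. K\<^sup>2 * nsq (\<lambda>n. (if n < N then a n else 0) - a n)) \<longlonglongrightarrow> K\<^sup>2 * 0"
    using lf unfolding a_def[symmetric] by (intro tendsto_intros tail_to_zero)
  then have lim0: "(\<lambda>N. K\<^sup>2 * nsq (\<lambda>n. (if n < N then a n else 0) - a n)) \<longlonglongrightarrow> 0" by simp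
  have "(\<lambda>N. nsq (taylor_coeff (\<lambda>z. v z * D N z))) \<longlonglongrightarrow> 0"
  proof (rule Lim_null_comparison[OF _ lim0])
    show "\<forall>\<^sub>F N in sequentially. norm (nsq (taylor_coeff (\<lambda>z. v z * D N z))) \<le> K\<^sup>2 * nsq (\<lambda>n. (if n < N then a n else 0) - a n)"
    proof (intro always_eventually allI)
      fix N
      have "nsq (taylor_coeff (\<lambda>z. v z * D N z)) \<ge> 0"
        by (rule nsq_nonneg[OF bounded_mult(1)[OF v K hD lD]])
      then show "norm (nsq (taylor_coeff (\<lambda>z. v z * D N z))) \<le> K\<^sup>2 * nsq (\<lambda>n. (if n < N then a n else 0) - a n)"
        using bd[of N] by simp
    qed
  qed
  then show ?thesis unfolding a_def[symmetric] eqf .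
qed

lemma iso_general:
  assumes inn: "inner_fun v"
    and f: "f holomorphic_on DD" and lf: "l2 (taylor_coeff f)"
    and g: "g holomorphic_on DD" and lg: "l2 (taylor_coeff g)"
  shows "l2 (taylor_coeff (\<lambda>z. v z * f z))"
    and "h2_inner (\<lambda>z. v z * f z) (\<lambda>z. v z * g z) = h2_inner f g"
proof -
  have v: "v holomorphic_on DD" using inn unfolding inner_fun_def by auto
  obtain K where K: "\<And>z. z \<in> DD \<Longrightarrow> cmod (v z) \<le> K" using inner_fun_bound[OF inn] by blast
  show lvf: "l2 (taylor_coeff (\<lambda>z. v z * f z))" by (rule bounded_mult(1)[OF v K f lf])
  have lvg: "l2 (taylor_coeff (\<lambda>z. v z * g z))" by (rule bounded_mult(1)[OF v K g lg])
  define a where "a = taylor_coeff f"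
  define b where "b = taylor_coeff g"
  define X where "X N = taylor_coeff (\<lambda>z. v z * poly_of a N z)" for N
  define Y where "Y N = taylor_coeff (\<lambda>z. v z * poly_of b N z)" for N
  have lX: "l2 (X N)" for N unfolding X_def by (rule bounded_mult(1)[OF v K poly_of_holo l2_poly_of])
  have lY: "l2 (Y N)" for N unfolding Y_def by (rule bounded_mult(1)[OF v K poly_of_holo l2_poly_of])
  have "(\<lambda>N. ip (X N) (Y N)) \<longlonglongrightarrow> ip (taylor_coeff (\<lambda>z. v z * f z)) (taylor_coeff (\<lambda>z. v z * g z))"
  proof (rule lim2[OF lvf lvg lX lY])
    show "(\<lambda>N. nsq (\<lambda>n. X N n - taylor_coeff (\<lambda>z. v z * f z) n)) \<longlonglongrightarrow> 0"
      unfolding X_def a_def by (rule approx_mult[OF v K f lf])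
    show "(\<lambda>N. nsq (\<lambda>n. Y N n - taylor_coeff (\<lambda>z. v z * g z) n)) \<longlonglongrightarrow> 0"
      unfolding Y_def b_def by (rule approx_mult[OF v K g lg])
  qed
  moreover have "ip (X N) (Y N) = (\<Sum>n<N. a n * cnj (b n))" for N
    unfolding X_def Y_def h2_inner_ip[symmetric] by (rule iso_poly[OF inn])
  moreover have "(\<lambda>N. \<Sum>n<N. a n * cnj (b n)) \<longlonglongrightarrow> ip a b"
    unfolding ip_def by (rule summable_LIMSEQ[OF ip_summable]) (use lf lg in \<open>simp_all add: a_def b_def\<close>)
  ultimately show "h2_inner (\<lambda>z. v z * f z) (\<lambda>z. v z * g z) = h2_inner f g"
    unfolding h2_inner_ip a_def b_def using LIMSEQ_unique by auto
qed

lemma H2_holo: "f \<in> H2 \<Longrightarrow> f holomorphic_on DD" by (simp add: H2_iff)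
lemma H2_l2: "f \<in> H2 \<Longrightarrow> l2 (taylor_coeff f)" by (simp add: H2_iff)
lemma H2_zero: "f \<in> H2 \<Longrightarrow> z \<notin> DD \<Longrightarrow> f z = 0" by (simp add: H2_iff)

lemma h2_inner_cong:
  assumes "\<And>z. z \<in> DD \<Longrightarrow> f z = f' z" "\<And>z. z \<in> DD \<Longrightarrow> g z = g' z"
  shows "h2_inner f g = h2_inner f' g'"
proof -
  have "taylor_coeff f = taylor_coeff f'" "taylor_coeff g = taylor_coeff g'"
    using tc_cong[of f f'] tc_cong[of g g'] assms by auto
  then show ?thesis unfolding h2_inner_ip by simp
qed

definition nz :: "(complex \<Rightarrow> complex) \<Rightarrow> complex \<Rightarrow> complex" where
  "nz f z = (if z \<in> DD then f z else 0)"

lemma nz_H2: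
  assumes "f holomorphic_on DD" "l2 (taylor_coeff f)"
  shows "nz f \<in> H2"
proof -
  have h: "nz f holomorphic_on DD" using assms(1) by (rule holomorphic_transform) (simp add: nz_def)
  have "taylor_coeff (nz f) = taylor_coeff f" by (rule ext, rule tc_cong) (simp add: nz_def)
  then show ?thesis unfolding H2_iff using h assms(2) by (simp add: nz_def)
qed

lemma nz_eq: "z \<in> DD \<Longrightarrow> nz f z = f z" by (simp add: nz_def)

lemma ip_delta: "ip (\<lambda>k. if k = n then 1 else 0) (\<lambda>k. if k = m then 1 else 0) = (if n = m then 1 else 0)"
proof -
  have "ip (\<lambda>k. if k = n then 1 else 0) (\<lambda>k. if k = m then 1 else 0)
      = (\<Sum>k. if k = n then (if n = m then 1 else 0) else 0)"
    unfolding ip_def by (intro suminf_cong) auto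
  also have "\<dots> = (if n = m then 1 else 0)" by (subst suminf_finite[of "{n}"]) auto
  finally show ?thesis .
qed

lemma l2_monom: "l2 (taylor_coeff (\<lambda>z. z ^ n))"
  by (rule l2_finite_support[of "Suc n"]) (simp add: tc_monom)

lemma E_orth:
  assumes inn: "inner_fun \<Theta>"
  shows "h2_inner (\<lambda>z. \<Theta> z * z ^ n) (\<lambda>z. \<Theta> z * z ^ m) = (if n = m then 1 else 0)"
proof -
  have "h2_inner (\<lambda>z. \<Theta> z * z ^ n) (\<lambda>z. \<Theta> z * z ^ m) = h2_inner (\<lambda>z. z ^ n) (\<lambda>z. z ^ m)"
    by (rule iso_general(2)[OF inn]) (intro holomorphic_intros l2_monom)+
  also have "\<dots> = (if n = m then 1 else 0)"
    unfolding h2_inner_ip tc_monom by (rule ip_delta)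
  finally show ?thesis .
qed

lemma bessel:
  fixes E :: "nat \<Rightarrow> nat \<Rightarrow> complex"
  assumes lx: "l2 x" and lE: "\<And>n. l2 (E n)" and orth: "\<And>n m. ip (E n) (E m) = (if n = m then 1 else 0)"
  shows "(\<Sum>n<N. (cmod (ip x (E n)))\<^sup>2) \<le> nsq x"
proof -
  define w where "w n = ip x (E n)" for n
  define s where "s k = (\<Sum>n<N. w n * E n k)" for k
  have lwE: "l2 (\<lambda>k. w n * E n k)" for n by (rule l2_scale[OF lE])
  have ls: "l2 s" unfolding s_def by (rule l2_sum) (rule lwE)
  define T where "T = (\<Sum>n<N. w n * cnj (w n))"
  have T: "T = of_real (\<Sum>n<N. (cmod (w n))\<^sup>2)" unfolding T_def of_real_sum complex_norm_square ..
  have ixs: "ip x s = T"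
  proof -
    have "ip x s = (\<Sum>n<N. ip x (\<lambda>k. w n * E n k))"
      unfolding s_def by (rule ip_sum_right[OF _ lwE lx]) simp
    also have "\<dots> = (\<Sum>n<N. cnj (w n) * ip x (E n))" by (intro sum.cong refl ip_scale_right lE lx)
    also have "\<dots> = T" unfolding T_def w_def by (simp add: mult.commute)
    finally show ?thesis .
  qed
  have ies: "ip (E n) s = cnj (w n)" if "n < N" for n
  proof -
    have "ip (E n) s = (\<Sum>m<N. ip (E n) (\<lambda>k. w m * E m k))"
      unfolding s_def by (rule ip_sum_right[OF _ lwE lE]) simp
    also have "\<dots> = (\<Sum>m<N. cnj (w m) * (if n = m then 1 else 0))"
      by (intro sum.cong refl) (simp add: ip_scale_right[OF lE lE] orth)
    also have "\<dots> = cnj (w n)" using that by (simp add: if_distrib cong: if_cong)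
    finally show ?thesis .
  qed
  have isx: "ip s x = T"
  proof -
    have "ip s x = (\<Sum>n<N. ip (\<lambda>k. w n * E n k) x)"
      unfolding s_def by (rule ip_sum_left[OF _ lwE lx]) simp
    also have "\<dots> = (\<Sum>n<N. w n * ip (E n) x)" by (intro sum.cong refl ip_scale_left lE lx)
    also have "\<dots> = T" unfolding T_def w_def using ip_cnj[OF lx lE] by simp
    finally show ?thesis .
  qed
  have iss: "ip s s = T"
  proof -
    have "ip s s = (\<Sum>n<N. ip (\<lambda>k. w n * E n k) s)"
      unfolding s_def[of k for k] by (rule ip_sum_left[OF _ lwE ls[unfolded s_def]]) simp
    also have "\<dots> = (\<Sum>n<N. w n * ip (E n) s)" by (intro sum.cong refl ip_scale_left lE ls)
    also have "\<dots> = T" unfolding T_def by (intro sum.cong refl) (simp add: ies)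
    finally show ?thesis .
  qed
  define d where "d k = x k - s k" for k
  have ld: "l2 d" unfolding d_def by (rule l2_diff[OF lx ls])
  have "ip d d = ip x d - ip s d" unfolding d_def[of k for k] by (rule ip_diff_left[OF lx ls ld[unfolded d_def]])
  also have "ip x d = ip x x - ip x s" unfolding d_def by (rule ip_diff_right[OF lx ls lx])
  also have "ip s d = ip s x - ip s s" unfolding d_def by (rule ip_diff_right[OF lx ls ls])
  finally have "ip d d = ip x x - T" using ixs isx iss by simp
  then have "of_real (nsq d) = of_real (nsq x) - (of_real (\<Sum>n<N. (cmod (w n))\<^sup>2) :: complex)"
    using ip_self[OF ld] ip_self[OF lx] T by simp
  then have "nsq d = nsq x - (\<Sum>n<N. (cmod (w n))\<^sup>2)"
    by (metis of_real_diff of_real_eq_iff)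
  then show ?thesis using nsq_nonneg[OF ld] by (simp add: w_def)
qed


lemma tc_zero: "taylor_coeff (\<lambda>z. 0) n = 0"
  unfolding taylor_coeff_def by simp

lemma nsq_zero: "nsq (\<lambda>n. 0) = 0" unfolding nsq_def by simp

lemma inner_holo: "inner_fun v \<Longrightarrow> v holomorphic_on DD" unfolding inner_fun_def by auto

lemma proj_coeffs:
  assumes inn: "inner_fun \<Theta>" and f: "f holomorphic_on DD" and lf: "l2 (taylor_coeff f)"
  shows "l2 (\<lambda>n. h2_inner f (\<lambda>z. \<Theta> z * z ^ n))"
    and "\<And>k. k holomorphic_on DD \<Longrightarrow> l2 (taylor_coeff k) \<Longrightarrow>
           h2_inner f (\<lambda>z. \<Theta> z * k z) = ip (\<lambda>n. h2_inner f (\<lambda>z. \<Theta> z * z ^ n)) (taylor_coeff k)"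
proof -
  define w where "w n = h2_inner f (\<lambda>z. \<Theta> z * z ^ n)" for n
  have th: "\<Theta> holomorphic_on DD" by (rule inner_holo[OF inn])
  obtain K where K: "\<And>z. z \<in> DD \<Longrightarrow> cmod (\<Theta> z) \<le> K" using inner_fun_bound[OF inn] by blast
  define E where "E n = taylor_coeff (\<lambda>z. \<Theta> z * z ^ n)" for n
  have lE: "l2 (E n)" for n unfolding E_def
    by (rule bounded_mult(1)[OF th K]) (auto intro!: holomorphic_intros l2_monom)
  have orth: "ip (E n) (E m) = (if n = m then 1 else 0)" for n m
    unfolding E_def h2_inner_ip[symmetric] by (rule E_orth[OF inn])
  have wE: "w n = ip (taylor_coeff f) (E n)" for n unfolding w_def E_def h2_inner_ip ..
  have lw: "l2 w"
    unfolding l2_def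
  proof (rule summableI_nonneg_bounded)
    show "(\<Sum>n<N. (cmod (w n))\<^sup>2) \<le> nsq (taylor_coeff f)" for N
      unfolding wE by (rule bessel[OF lf lE orth])
  qed simp
  then show "l2 (\<lambda>n. h2_inner f (\<lambda>z. \<Theta> z * z ^ n))" unfolding w_def .
  fix k assume k: "k holomorphic_on DD" and lk: "l2 (taylor_coeff k)"
  define \<kappa> where "\<kappa> = taylor_coeff k"
  define Y where "Y N = taylor_coeff (\<lambda>z. \<Theta> z * poly_of \<kappa> N z)" for N
  have lY: "l2 (Y N)" for N unfolding Y_def by (rule bounded_mult(1)[OF th K poly_of_holo l2_poly_of])
  have Yeq: "Y N = (\<lambda>m. \<Sum>n<N. \<kappa> n * E n m)" for N
  proof (rule ext)
    fix m
    have "(\<lambda>z. \<Theta> z * poly_of \<kappa> N z) = (\<lambda>z. \<Sum>n<N. \<kappa> n * (\<Theta> z * z ^ n))"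
      by (rule ext) (simp add: poly_of_def sum_distrib_left mult_ac)
    then have "Y N m = taylor_coeff (\<lambda>z. \<Sum>n<N. \<kappa> n * (\<Theta> z * z ^ n)) m" by (simp add: Y_def)
    also have "\<dots> = (\<Sum>n<N. taylor_coeff (\<lambda>z. \<kappa> n * (\<Theta> z * z ^ n)) m)"
      by (rule tc_sum) (use th in \<open>intro holomorphic_intros\<close>)
    also have "\<dots> = (\<Sum>n<N. \<kappa> n * E n m)"
      unfolding E_def by (intro sum.cong refl tc_cmult) (use th in \<open>intro holomorphic_intros\<close>)
    finally show "Y N m = (\<Sum>n<N. \<kappa> n * E n m)" .
  qed
  have ipY: "ip (taylor_coeff f) (Y N) = (\<Sum>n<N. w n * cnj (\<kappa> n))" for N
  proof -
    have "ip (taylor_coeff f) (Y N) = (\<Sum>n<N. ip (taylor_coeff f) (\<lambda>m. \<kappa> n * E n m))"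
      unfolding Yeq by (rule ip_sum_right[OF _ l2_scale[OF lE] lf]) simp
    also have "\<dots> = (\<Sum>n<N. w n * cnj (\<kappa> n))"
      by (intro sum.cong refl) (simp add: ip_scale_right[OF lE lf] wE mult.commute)
    finally show ?thesis .
  qed
  have lim_a: "(\<lambda>N. ip (taylor_coeff f) (Y N)) \<longlonglongrightarrow> ip (taylor_coeff f) (taylor_coeff (\<lambda>z. \<Theta> z * k z))"
  proof (rule lim2[OF lf bounded_mult(1)[OF th K k lk] _ lY])
    show "l2 (taylor_coeff f)" for N :: nat by (rule lf)
    show "(\<lambda>N. nsq (\<lambda>n. taylor_coeff f n - taylor_coeff f n)) \<longlonglongrightarrow> 0" by (simp add: nsq_zero)
    show "(\<lambda>N. nsq (\<lambda>n. Y N n - taylor_coeff (\<lambda>z. \<Theta> z * k z) n)) \<longlonglongrightarrow> 0"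
      unfolding Y_def \<kappa>_def by (rule approx_mult[OF th K k lk])
  qed
  have lim_b: "(\<lambda>N. \<Sum>n<N. w n * cnj (\<kappa> n)) \<longlonglongrightarrow> ip w \<kappa>"
    unfolding ip_def by (rule summable_LIMSEQ[OF ip_summable[OF lw]]) (use lk in \<open>simp add: \<kappa>_def\<close>)
  have "ip (taylor_coeff f) (taylor_coeff (\<lambda>z. \<Theta> z * k z)) = ip w \<kappa>"
    using LIMSEQ_unique[OF lim_a lim_b[folded ipY]] .
  moreover have wfun: "(\<lambda>n. h2_inner f (\<lambda>z. \<Theta> z * z ^ n)) = w" by (rule ext) (simp add: w_def)
  ultimately show "h2_inner f (\<lambda>z. \<Theta> z * k z) = ip (\<lambda>n. h2_inner f (\<lambda>z. \<Theta> z * z ^ n)) (taylor_coeff k)"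
    unfolding wfun unfolding h2_inner_ip \<kappa>_def by simp
qed


lemma model_space_H2: "g \<in> model_space \<Theta> \<Longrightarrow> g \<in> H2"
  unfolding model_space_def by auto

lemma model_spaceD: "g \<in> model_space \<Theta> \<Longrightarrow> k \<in> H2 \<Longrightarrow> h2_inner g (\<lambda>z. \<Theta> z * k z) = 0"
  unfolding model_space_def by auto

lemma H2_diff:
  assumes "f \<in> H2" "g \<in> H2"
  shows "(\<lambda>z. f z - g z) \<in> H2" and "taylor_coeff (\<lambda>z. f z - g z) = (\<lambda>n. taylor_coeff f n - taylor_coeff g n)"
proof -
  show tc: "taylor_coeff (\<lambda>z. f z - g z) = (\<lambda>n. taylor_coeff f n - taylor_coeff g n)"
    by (rule ext, rule tc_diff) (use assms in \<open>auto simp: H2_iff\<close>)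
  show "(\<lambda>z. f z - g z) \<in> H2" unfolding H2_iff tc
    using assms by (auto simp: H2_iff intro!: holomorphic_intros l2_diff)
qed

lemma proj_unique:
  assumes inn: "inner_fun \<Theta>" and fH: "f \<in> H2"
    and g1: "g1 \<in> model_space \<Theta>" "\<forall>k\<in>model_space \<Theta>. h2_inner (\<lambda>z. f z - g1 z) k = 0"
    and g2: "g2 \<in> model_space \<Theta>" "\<forall>k\<in>model_space \<Theta>. h2_inner (\<lambda>z. f z - g2 z) k = 0"
  shows "g1 = g2"
proof -
  have th: "\<Theta> holomorphic_on DD" by (rule inner_holo[OF inn])
  obtain K where K: "\<And>z. z \<in> DD \<Longrightarrow> cmod (\<Theta> z) \<le> K" using inner_fun_bound[OF inn] by blast
  have H1: "g1 \<in> H2" and H2': "g2 \<in> H2" using g1 g2 by (auto intro: model_space_H2)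
  define d where "d = (\<lambda>z. g1 z - g2 z)"
  have dH: "d \<in> H2" and tcd: "taylor_coeff d = (\<lambda>n. taylor_coeff g1 n - taylor_coeff g2 n)"
    unfolding d_def using H2_diff[OF H1 H2'] by auto
  have dM: "d \<in> model_space \<Theta>"
    unfolding model_space_def
  proof (intro CollectI conjI ballI dH)
    fix k assume kH: "k \<in> H2"
    have lk: "l2 (taylor_coeff (\<lambda>z. \<Theta> z * k z))"
      by (rule bounded_mult(1)[OF th K H2_holo[OF kH] H2_l2[OF kH]])
    have "h2_inner d (\<lambda>z. \<Theta> z * k z) = h2_inner g1 (\<lambda>z. \<Theta> z * k z) - h2_inner g2 (\<lambda>z. \<Theta> z * k z)"
      unfolding h2_inner_ip tcd by (rule ip_diff_left[OF H2_l2[OF H1] H2_l2[OF H2'] lk])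
    also have "\<dots> = 0" using model_spaceD[OF g1(1) kH] model_spaceD[OF g2(1) kH] by simp
    finally show "h2_inner d (\<lambda>z. \<Theta> z * k z) = 0" .
  qed
  have e1: "(\<lambda>z. f z - g1 z) \<in> H2" "(\<lambda>z. f z - g2 z) \<in> H2" using H2_diff fH H1 H2' by auto
  have "taylor_coeff d = (\<lambda>n. taylor_coeff (\<lambda>z. f z - g2 z) n - taylor_coeff (\<lambda>z. f z - g1 z) n)"
    unfolding tcd H2_diff(2)[OF fH H1] H2_diff(2)[OF fH H2'] by (rule ext) simp
  then have "h2_inner d d = h2_inner (\<lambda>z. f z - g2 z) d - h2_inner (\<lambda>z. f z - g1 z) d"
    unfolding h2_inner_ip
    by (metis ip_diff_left H2_l2 e1 dH)
  also have "\<dots> = 0" using g1(2) g2(2) dM by simp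
  finally have "ip (taylor_coeff d) (taylor_coeff d) = 0" unfolding h2_inner_ip .
  then have "nsq (taylor_coeff d) = 0" using ip_self[OF H2_l2[OF dH]] by simp
  then have tc0: "taylor_coeff d n = taylor_coeff (\<lambda>z. 0) n" for n
    using nsq_eq_0[OF H2_l2[OF dH]] tc_zero by simp
  have "d z = 0" if "z \<in> DD" for z
    using tc_determines[OF H2_holo[OF dH] _ tc0 that] by simp
  then show "g1 = g2"
    using H2_zero[OF H1] H2_zero[OF H2'] unfolding d_def by (intro ext) (metis eq_iff_diff_eq_0)
qed

lemma model_proj_eq:
  assumes inn: "inner_fun \<Theta>" and fH: "f \<in> H2"
  shows "\<exists>W\<in>H2. model_proj \<Theta> f = (\<lambda>z. f z - \<Theta> z * W z)"
proof -
  have th: "\<Theta> holomorphic_on DD" by (rule inner_holo[OF inn])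
  obtain K where K: "\<And>z. z \<in> DD \<Longrightarrow> cmod (\<Theta> z) \<le> K" using inner_fun_bound[OF inn] by blast
  define w where "w n = h2_inner f (\<lambda>z. \<Theta> z * z ^ n)" for n
  have lw: "l2 w" unfolding w_def by (rule proj_coeffs(1)[OF inn H2_holo[OF fH] H2_l2[OF fH]])
  have key: "h2_inner f (\<lambda>z. \<Theta> z * k z) = ip w (taylor_coeff k)" if "k \<in> H2" for k
  proof -
    have wfun: "(\<lambda>n. h2_inner f (\<lambda>z. \<Theta> z * z ^ n)) = w" by (rule ext) (simp add: w_def)
    show ?thesis
      using proj_coeffs(2)[OF inn H2_holo[OF fH] H2_l2[OF fH] H2_holo[OF that] H2_l2[OF that]]
      unfolding wfun .
  qed
  define W where "W = fun_of w"
  have WH: "W \<in> H2" unfolding W_def by (rule fun_of_H2[OF lw])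
  have tcW: "taylor_coeff W = w" unfolding W_def by (rule ext, rule tc_fun_of[OF lw])
  define TW where "TW = (\<lambda>z. \<Theta> z * W z)"
  have TWH: "TW \<in> H2"
    unfolding H2_iff TW_def using th H2_holo[OF WH] H2_zero[OF WH]
      bounded_mult(1)[OF th K H2_holo[OF WH] H2_l2[OF WH]]
    by (auto intro!: holomorphic_intros)
  define Pf where "Pf = (\<lambda>z. f z - \<Theta> z * W z)"
  have PfH: "Pf \<in> H2" and tcP: "taylor_coeff Pf = (\<lambda>n. taylor_coeff f n - taylor_coeff TW n)"
    unfolding Pf_def using H2_diff[OF fH TWH] unfolding TW_def by auto
  have PfM: "Pf \<in> model_space \<Theta>"
    unfolding model_space_def
  proof (intro CollectI conjI ballI PfH)
    fix k assume kH: "k \<in> H2"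
    have lk: "l2 (taylor_coeff (\<lambda>z. \<Theta> z * k z))"
      by (rule bounded_mult(1)[OF th K H2_holo[OF kH] H2_l2[OF kH]])
    have "h2_inner Pf (\<lambda>z. \<Theta> z * k z) = h2_inner f (\<lambda>z. \<Theta> z * k z) - h2_inner TW (\<lambda>z. \<Theta> z * k z)"
      unfolding h2_inner_ip tcP by (rule ip_diff_left[OF H2_l2[OF fH] H2_l2[OF TWH] lk])
    also have "h2_inner TW (\<lambda>z. \<Theta> z * k z) = h2_inner W k"
      unfolding TW_def by (rule iso_general(2)[OF inn H2_holo[OF WH] H2_l2[OF WH] H2_holo[OF kH] H2_l2[OF kH]])
    also have "h2_inner W k = ip w (taylor_coeff k)" unfolding h2_inner_ip tcW ..
    also have "h2_inner f (\<lambda>z. \<Theta> z * k z) = ip w (taylor_coeff k)" by (rule key[OF kH])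
    finally show "h2_inner Pf (\<lambda>z. \<Theta> z * k z) = 0" by simp
  qed
  have PfO: "\<forall>k\<in>model_space \<Theta>. h2_inner (\<lambda>z. f z - Pf z) k = 0"
  proof
    fix k assume kM: "k \<in> model_space \<Theta>"
    have kH: "k \<in> H2" by (rule model_space_H2[OF kM])
    have "(\<lambda>z. f z - Pf z) = TW" by (rule ext) (simp add: Pf_def TW_def)
    then have "h2_inner (\<lambda>z. f z - Pf z) k = cnj (h2_inner k TW)"
      unfolding h2_inner_ip by (simp add: ip_cnj[OF H2_l2[OF kH] H2_l2[OF TWH]])
    also have "h2_inner k TW = 0" unfolding TW_def by (rule model_spaceD[OF kM WH])
    finally show "h2_inner (\<lambda>z. f z - Pf z) k = 0" by simp
  qed
  have "model_proj \<Theta> f = Pf"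
    unfolding model_proj_def
  proof (rule the_equality)
    show "Pf \<in> model_space \<Theta> \<and> (\<forall>k\<in>model_space \<Theta>. h2_inner (\<lambda>z. f z - Pf z) k = 0)"
      using PfM PfO by blast
    fix g assume g: "g \<in> model_space \<Theta> \<and> (\<forall>k\<in>model_space \<Theta>. h2_inner (\<lambda>z. f z - g z) k = 0)"
    show "g = Pf" using proj_unique[OF inn fH _ _ PfM PfO] g by blast
  qed
  then show ?thesis using WH unfolding Pf_def by blast
qed

lemma mult_H2:
  assumes inn: "inner_fun \<Theta>" and WH: "W \<in> H2"
  shows "(\<lambda>z. \<Theta> z * W z) \<in> H2"
proof -
  have th: "\<Theta> holomorphic_on DD" by (rule inner_holo[OF inn])
  obtain K where K: "\<And>z. z \<in> DD \<Longrightarrow> cmod (\<Theta> z) \<le> K" using inner_fun_bound[OF inn] by blast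
  show ?thesis
    unfolding H2_iff using th H2_holo[OF WH] H2_zero[OF WH]
      bounded_mult(1)[OF th K H2_holo[OF WH] H2_l2[OF WH]]
    by (auto intro!: holomorphic_intros)
qed

lemma pow_l2:
  assumes inn: "inner_fun \<phi>" and f: "f holomorphic_on DD" and lf: "l2 (taylor_coeff f)"
  shows "l2 (taylor_coeff (\<lambda>z. \<phi> z ^ n * f z))"
proof (induction n)
  case 0 then show ?case using lf by simp
next
  case (Suc n)
  have th: "\<phi> holomorphic_on DD" by (rule inner_holo[OF inn])
  obtain K where K: "\<And>z. z \<in> DD \<Longrightarrow> cmod (\<phi> z) \<le> K" using inner_fun_bound[OF inn] by blast
  have "(\<lambda>z. \<phi> z ^ Suc n * f z) = (\<lambda>z. \<phi> z * (\<phi> z ^ n * f z))" by (rule ext) (simp add: mult_ac)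
  moreover have "l2 (taylor_coeff (\<lambda>z. \<phi> z * (\<phi> z ^ n * f z)))"
    by (rule bounded_mult(1)[OF th K]) (use th f Suc.IH in \<open>auto intro!: holomorphic_intros\<close>)
  ultimately show ?case by simp
qed

lemma zero_H2: "(\<lambda>z. 0) \<in> H2"
proof -
  have "taylor_coeff (\<lambda>z. 0) = (\<lambda>n. 0)" by (rule ext) (rule tc_zero)
  then show ?thesis unfolding H2_iff by (auto simp: l2_zero)
qed

theorem theorem6p4:
  fixes \<Theta> \<phi> I :: "complex \<Rightarrow> complex"
  assumes "inner_fun \<Theta>" and "inner_fun \<phi>" and "inner_fun I"
    and "\<forall>z\<in>ball 0 1. \<Theta> z = \<phi> z * I z"
  shows "\<forall>h. (\<exists>v g. g \<in> model_space \<phi> \<and> inner_divisor v I \<and> h = (\<lambda>z. v z * g z))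
            \<and> h2_inner h h = 1 \<longrightarrow>
          (\<forall>n\<ge>1. h2_inner ((compressed_op \<Theta> \<phi> ^^ n) h) h = 0)"
proof (rule allI, rule impI)
  note innT = assms(1) and innP = assms(2) and TPI = assms(4)
  fix h
  assume "(\<exists>v g. g \<in> model_space \<phi> \<and> inner_divisor v I \<and> h = (\<lambda>z. v z * g z)) \<and> h2_inner h h = 1"
  then obtain v g where gM: "g \<in> model_space \<phi>" and vI: "inner_divisor v I" and hdef: "h = (\<lambda>z. v z * g z)"
    by blast
  have innV: "inner_fun v" using vI unfolding inner_divisor_def by auto
  obtain u where innU: "inner_fun u" and Iuv: "\<And>z. z \<in> DD \<Longrightarrow> I z = v z * u z"
    using vI unfolding inner_divisor_def by auto
  have tT: "\<Theta> holomorphic_on DD" and tP: "\<phi> holomorphic_on DD" and tV: "v holomorphic_on DD"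
    and tU: "u holomorphic_on DD"
    using innT innP innV innU by (auto intro: inner_holo)
  obtain KP where KP: "\<And>z. z \<in> DD \<Longrightarrow> cmod (\<phi> z) \<le> KP" using inner_fun_bound[OF innP] by blast
  obtain KU where KU: "\<And>z. z \<in> DD \<Longrightarrow> cmod (u z) \<le> KU" using inner_fun_bound[OF innU] by blast
  have gH: "g \<in> H2" by (rule model_space_H2[OF gM])
  have hH: "h \<in> H2" unfolding hdef by (rule mult_H2[OF innV gH])
  have hM: "h \<in> model_space \<Theta>"
    unfolding model_space_def
  proof (intro CollectI conjI ballI hH)
    fix k assume kH: "k \<in> H2"
    define uk where "uk = nz (\<lambda>z. u z * k z)"
    have ukH: "uk \<in> H2" unfolding uk_def
      by (rule nz_H2) (use tU H2_holo[OF kH] bounded_mult(1)[OF tU KU H2_holo[OF kH] H2_l2[OF kH]] in \<open>auto intro!: holomorphic_intros\<close>)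
    define puk where "puk = nz (\<lambda>z. \<phi> z * uk z)"
    have pukH: "puk \<in> H2" unfolding puk_def
      by (rule nz_H2) (use tP H2_holo[OF ukH] bounded_mult(1)[OF tP KP H2_holo[OF ukH] H2_l2[OF ukH]] in \<open>auto intro!: holomorphic_intros\<close>)
    have "h2_inner h (\<lambda>z. \<Theta> z * k z) = h2_inner (\<lambda>z. v z * g z) (\<lambda>z. v z * puk z)"
    proof (rule h2_inner_cong)
      fix z :: complex assume z: "z \<in> DD"
      show "h z = v z * g z" by (simp add: hdef)
      show "\<Theta> z * k z = v z * puk z"
        using z TPI Iuv[OF z] by (simp add: puk_def uk_def nz_def mult_ac)
    qed
    also have "\<dots> = h2_inner g puk"
      by (rule iso_general(2)[OF innV H2_holo[OF gH] H2_l2[OF gH] H2_holo[OF pukH] H2_l2[OF pukH]])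
    also have "\<dots> = h2_inner g (\<lambda>z. \<phi> z * uk z)"
      by (rule h2_inner_cong) (simp_all add: puk_def nz_def)
    also have "\<dots> = 0" by (rule model_spaceD[OF gM ukH])
    finally show "h2_inner h (\<lambda>z. \<Theta> z * k z) = 0" .
  qed
  define T where "T = compressed_op \<Theta> \<phi>"
  have iter: "(T ^^ n) h \<in> H2 \<and> (\<exists>w\<in>H2. \<forall>z\<in>DD. (T ^^ n) h z = \<phi> z ^ n * h z + \<Theta> z * w z)" for n
  proof (induction n)
    case 0
    show ?case using hH zero_H2 by auto
  next
    case (Suc n)
    define y where "y = (T ^^ n) h"
    have yH: "y \<in> H2" using Suc.IH by (simp add: y_def)
    obtain w where wH: "w \<in> H2" and yw: "\<And>z. z \<in> DD \<Longrightarrow> y z = \<phi> z ^ n * h z + \<Theta> z * w z"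
      using Suc.IH unfolding y_def by blast
    have pyH: "(\<lambda>z. \<phi> z * y z) \<in> H2" by (rule mult_H2[OF innP yH])
    obtain W where WH: "W \<in> H2" and TW: "model_proj \<Theta> (\<lambda>z. \<phi> z * y z) = (\<lambda>z. \<phi> z * y z - \<Theta> z * W z)"
      using model_proj_eq[OF innT pyH] by blast
    have Ty: "(T ^^ Suc n) h = (\<lambda>z. \<phi> z * y z - \<Theta> z * W z)"
    proof -
      have "(T ^^ Suc n) h = T y" by (simp add: y_def)
      also have "T y = model_proj \<Theta> (\<lambda>z. \<phi> z * y z)" unfolding T_def compressed_op_def ..
      also note TW
      finally show ?thesis .
    qed
    have TyH: "(T ^^ Suc n) h \<in> H2" unfolding Ty
      by (rule H2_diff(1)[OF pyH mult_H2[OF innT WH]])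
    define w' where "w' = nz (\<lambda>z. \<phi> z * w z - W z)"
    have w'H: "w' \<in> H2"
    proof -
      have "(\<lambda>z. \<phi> z * w z - W z) \<in> H2" by (rule H2_diff(1)[OF mult_H2[OF innP wH] WH])
      then show ?thesis unfolding w'_def by (intro nz_H2) (auto simp: H2_iff)
    qed
    have "\<forall>z\<in>DD. (T ^^ Suc n) h z = \<phi> z ^ Suc n * h z + \<Theta> z * w' z"
    proof
      fix z :: complex assume z: "z \<in> DD"
      show "(T ^^ Suc n) h z = \<phi> z ^ Suc n * h z + \<Theta> z * w' z"
        unfolding Ty using yw[OF z] z by (simp add: w'_def nz_def algebra_simps)
    qed
    then show ?case using TyH w'H by blast
  qed
  show "\<forall>n\<ge>1. h2_inner ((compressed_op \<Theta> \<phi> ^^ n) h) h = 0"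
  proof (intro allI impI)
    fix n :: nat assume n1: "n \<ge> 1"
    then obtain m where nm: "n = Suc m" by (cases n) auto
    obtain w where wH: "w \<in> H2" and Tw: "\<And>z. z \<in> DD \<Longrightarrow> (T ^^ n) h z = \<phi> z ^ n * h z + \<Theta> z * w z"
      using iter[of n] by blast
    have TwH: "(\<lambda>z. \<Theta> z * w z) \<in> H2" by (rule mult_H2[OF innT wH])
    have lpg: "l2 (taylor_coeff (\<lambda>z. \<phi> z ^ n * g z))" by (rule pow_l2[OF innP H2_holo[OF gH] H2_l2[OF gH]])
    have lph: "l2 (taylor_coeff (\<lambda>z. \<phi> z ^ n * h z))" by (rule pow_l2[OF innP H2_holo[OF hH] H2_l2[OF hH]])
    have hph: "(\<lambda>z. \<phi> z ^ n * h z) holomorphic_on DD" using tP H2_holo[OF hH] by (intro holomorphic_intros)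
    have hpg: "(\<lambda>z. \<phi> z ^ n * g z) holomorphic_on DD" using tP H2_holo[OF gH] by (intro holomorphic_intros)
    have "h2_inner ((T ^^ n) h) h = h2_inner (\<lambda>z. \<phi> z ^ n * h z + \<Theta> z * w z) h"
      by (rule h2_inner_cong) (simp_all add: Tw)
    also have "\<dots> = h2_inner (\<lambda>z. \<phi> z ^ n * h z) h + h2_inner (\<lambda>z. \<Theta> z * w z) h"
    proof -
      have "taylor_coeff (\<lambda>z. \<phi> z ^ n * h z + \<Theta> z * w z)
          = (\<lambda>k. taylor_coeff (\<lambda>z. \<phi> z ^ n * h z) k + taylor_coeff (\<lambda>z. \<Theta> z * w z) k)"
        by (rule ext, rule tc_add[OF hph H2_holo[OF TwH]])
      then show ?thesis unfolding h2_inner_ip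
        using ip_add_left[OF lph H2_l2[OF TwH] H2_l2[OF hH]] by simp
    qed
    also have "h2_inner (\<lambda>z. \<Theta> z * w z) h = 0"
    proof -
      have "h2_inner (\<lambda>z. \<Theta> z * w z) h = cnj (h2_inner h (\<lambda>z. \<Theta> z * w z))"
        unfolding h2_inner_ip by (rule ip_cnj[OF H2_l2[OF hH] H2_l2[OF TwH]])
      also have "h2_inner h (\<lambda>z. \<Theta> z * w z) = 0" by (rule model_spaceD[OF hM wH])
      finally show ?thesis by simp
    qed
    also have "h2_inner (\<lambda>z. \<phi> z ^ n * h z) h = h2_inner (\<lambda>z. v z * (\<phi> z ^ n * g z)) (\<lambda>z. v z * g z)"
      by (rule h2_inner_cong) (simp_all add: hdef mult_ac)
    also have "\<dots> = h2_inner (\<lambda>z. \<phi> z ^ n * g z) g"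
      by (rule iso_general(2)[OF innV hpg lpg H2_holo[OF gH] H2_l2[OF gH]])
    also have "\<dots> = 0"
    proof -
      define q where "q = nz (\<lambda>z. \<phi> z ^ m * g z)"
      have qH: "q \<in> H2" unfolding q_def
        by (rule nz_H2) (use tP H2_holo[OF gH] pow_l2[OF innP H2_holo[OF gH] H2_l2[OF gH], of m] in \<open>auto intro!: holomorphic_intros\<close>)
      have pqH: "(\<lambda>z. \<phi> z * q z) \<in> H2" by (rule mult_H2[OF innP qH])
      have "h2_inner (\<lambda>z. \<phi> z ^ n * g z) g = h2_inner (\<lambda>z. \<phi> z * q z) g"
        by (rule h2_inner_cong) (simp_all add: q_def nz_def nm)
      also have "\<dots> = cnj (h2_inner g (\<lambda>z. \<phi> z * q z))"
        unfolding h2_inner_ip by (rule ip_cnj[OF H2_l2[OF gH] H2_l2[OF pqH]])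
      also have "h2_inner g (\<lambda>z. \<phi> z * q z) = 0" by (rule model_spaceD[OF gM qH])
      finally show ?thesis by simp
    qed
    finally show "h2_inner ((compressed_op \<Theta> \<phi> ^^ n) h) h = 0" by (simp add: T_def)
  qed
qed


end
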